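(* Let $r_1,r_2\in(0,1)$, $a_1,a_2\in(1,\infty)$, and for $i=1,2$ let $l_i$ be Lebesgue measurable, integrable, with $\int_{\mathbb{R}}l_i=1$, $\int_{\mathbb{R}}l_i(y)e^{\lambda y}dy<\infty$ for all $\lambda\in\mathbb{R}$, and $l_i(y)=l_i(-y)\ge0$. Define $Q=(Q_1,Q_2)$ on $\mathcal{C}_{[\theta,\mathbf{1}]}$ by \[ Q_1(\phi,\psi)(t)=1-\int_{\mathbb{R}}(1-\phi (y))e^{r_{1}(\phi (y)-a_{1}\psi(y))}l_{1}(t-y)\,dy,\quad Q_2(\phi,\psi)(t)=\int_{\mathbb{R}} \psi (y)e^{r_{2}(1-a_2-\psi (y)+a_{2}\phi (y))}l_{2}(t-y)\,dy, \] and let $F_0=(0,0)$, $F_2=(1-k_1,k_2)$, $F_3=(1,1)$ with $k_1=\frac{1-a_1}{1-a_1a_2}$, $k_2=\frac{1-a_2}{1-a_1a_2}$. Then \[ c^*_-(F_2,F_3)+c^*_+(F_0,F_2)>0, \] where $c^*_-(F_2,F_3)$ is the leftward spreading speed of the monostable subsystem $\{Q^n\}_{n\ge0}$ restricted to $\mathcal{C}_{[F_2,F_3]}$ and $c^*_+(F_0,F_2)$ is the rightward spreading speed of the monostable subsystem $\{Q^n\}_{n\ge0}$ restricted to $\mathcal{C}_{[F_0,F_2]}$.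
   Context: $\mathcal{C}$ is the space of uniformly continuous bounded functions $\mathbb{R}\to\mathbb{R}^2$ with the compact-open topology and componentwise order; for $A\le B$ in $\mathbb{R}^2$, $\mathcal{C}_{[A,B]}=\{U\in\mathcal{C}: A\le U(x)\le B\ \forall x\}$. $F_0,F_2,F_3$ are constant fixed points of $Q$ with $F_0\le F_2\le F_3$, and $Q$ maps $\mathcal{C}_{[F_0,F_2]}$ and $\mathcal{C}_{[F_2,F_3]}$ into themselves. On $\mathcal{C}_{[F_2,F_3]}$ the state $F_3$ is attracting and $F_2$ unstable; the leftward spreading speed $c^*_-(F_2,F_3)$ (in the sense of Liang–Zhao / Fang–Zhao) is the number $c^*$ such that for $\Phi\in\mathcal{C}_{[F_2,F_3]}$ with $\Phi-F_2$ compactly supported, $\lim_{n\to\infty}\sup_{x\le -cn}|Q^n[\Phi](x)-F_2|=0$ for every $c>c^*$, while for $c<c^*$ and $\Phi$ sufficiently far from $F_2$ on a sufficiently long interval, $\lim_{n\to\infty}\sup_{-cn\le x\le 0}|Q^n[\Phi](x)-F_3|=0$ (the speed at which $F_3$ invades $F_2$ to the left). Analogously, on $\mathcal{C}_{[F_0,F_2]}$ the state $F_0$ is attracting and $F_2$ unstable, and $c^*_+(F_0,F_2)$ is the speed at which $F_0$ invades $F_2$ to the right: for $\Phi$ with $F_2-\Phi$ compactly supported, $\lim_n\sup_{x\ge cn}|Q^n[\Phi](x)-F_2|=0$ for $c>c^*_+$, and for $c<c^*_+$ and suitable $\Phi$, $\lim_n\sup_{0\le x\le cn}|Q^n[\Phi](x)-F_0|=0$.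 *)

theory Defs
  imports "HOL-Analysis.Analysis"
begin

type_synonym state = "real \<times> real"
type_synonym sfun = "real \<Rightarrow> real \<times> real"

definition leq2 :: "state \<Rightarrow> state \<Rightarrow> bool" where
  "leq2 u v \<longleftrightarrow> fst u \<le> fst v \<and> snd u \<le> snd v"

definition UCB :: "sfun set" where
  "UCB = {U. uniformly_continuous_on UNIV U \<and> bounded (range U)}"

definition Cint :: "state \<Rightarrow> state \<Rightarrow> sfun set" where
  "Cint A B = {U \<in> UCB. \<forall>x. leq2 A (U x) \<and> leq2 (U x) B}"

definition Qop :: "real \<Rightarrow> real \<Rightarrow> real \<Rightarrow> real \<Rightarrow> (real \<Rightarrow> real) \<Rightarrow> (real \<Rightarrow> real)
    \<Rightarrow> sfun \<Rightarrow> sfun" where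
  "Qop r1 r2 a1 a2 l1 l2 U = (\<lambda>t.
     (1 - (LINT y|lebesgue. (1 - fst (U y)) * exp (r1 * (fst (U y) - a1 * snd (U y))) * l1 (t - y)),
      (LINT y|lebesgue. snd (U y) * exp (r2 * (1 - a2 - snd (U y) + a2 * fst (U y))) * l2 (t - y))))"

text \<open>Leftward spreading speed c* of the monostable system Q on C_[Uu,S], where Uu (lower end)
  is the unstable state and S (upper end) the attracting state: the speed at which S invades Uu
  to the left (Liang--Zhao / Fang--Zhao characterization).\<close>
definition left_speed :: "(sfun \<Rightarrow> sfun) \<Rightarrow> state \<Rightarrow> state \<Rightarrow> real \<Rightarrow> bool" where
  "left_speed Q Uu S cs \<longleftrightarrow>
     (\<forall>\<Phi>\<in>Cint Uu S. (\<exists>R. \<forall>x. \<bar>x\<bar> > R \<longrightarrow> \<Phi> x = Uu) \<longrightarrow>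
        (\<forall>c>cs. \<forall>\<epsilon>>0. eventually (\<lambda>n. \<forall>x. x \<le> - c * real n \<longrightarrow> dist ((Q ^^ n) \<Phi> x) Uu \<le> \<epsilon>) sequentially))
   \<and> (\<forall>c<cs. \<forall>\<sigma>::state. fst \<sigma> > 0 \<and> snd \<sigma> > 0 \<longrightarrow>
        (\<exists>r>0. \<forall>\<Phi>\<in>Cint Uu S.
           (\<exists>x0. \<forall>x. x0 - r \<le> x \<and> x \<le> x0 + r \<longrightarrow> leq2 (fst Uu + fst \<sigma>, snd Uu + snd \<sigma>) (\<Phi> x)) \<longrightarrow>
           (\<forall>\<epsilon>>0. eventually (\<lambda>n. \<forall>x. - c * real n \<le> x \<and> x \<le> 0 \<longrightarrow> dist ((Q ^^ n) \<Phi> x) S \<le> \<epsilon>) sequentially)))"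

text \<open>Rightward spreading speed c* of Q on C_[S,Uu], where S (lower end) is the attracting
  state and Uu (upper end) the unstable state: the speed at which S invades Uu to the right.\<close>
definition right_speed :: "(sfun \<Rightarrow> sfun) \<Rightarrow> state \<Rightarrow> state \<Rightarrow> real \<Rightarrow> bool" where
  "right_speed Q S Uu cs \<longleftrightarrow>
     (\<forall>\<Phi>\<in>Cint S Uu. (\<exists>R. \<forall>x. \<bar>x\<bar> > R \<longrightarrow> \<Phi> x = Uu) \<longrightarrow>
        (\<forall>c>cs. \<forall>\<epsilon>>0. eventually (\<lambda>n. \<forall>x. c * real n \<le> x \<longrightarrow> dist ((Q ^^ n) \<Phi> x) Uu \<le> \<epsilon>) sequentially))
   \<and> (\<forall>c<cs. \<forall>\<sigma>::state. fst \<sigma> > 0 \<and> snd \<sigma> > 0 \<longrightarrow>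
        (\<exists>r>0. \<forall>\<Phi>\<in>Cint S Uu.
           (\<exists>x0. \<forall>x. x0 - r \<le> x \<and> x \<le> x0 + r \<longrightarrow> leq2 (\<Phi> x) (fst Uu - fst \<sigma>, snd Uu - snd \<sigma>)) \<longrightarrow>
           (\<forall>\<epsilon>>0. eventually (\<lambda>n. \<forall>x. 0 \<le> x \<and> x \<le> c * real n \<longrightarrow> dist ((Q ^^ n) \<Phi> x) S \<le> \<epsilon>) sequentially)))"

definition kernel_ok :: "(real \<Rightarrow> real) \<Rightarrow> bool" where
  "kernel_ok l \<longleftrightarrow> l \<in> borel_measurable lebesgue \<and> integrable lebesgue l
     \<and> (LINT y|lebesgue. l y) = 1
     \<and> (\<forall>\<mu>::real. integrable lebesgue (\<lambda>y. l y * exp (\<mu> * y)))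
     \<and> (\<forall>y. l y = l (- y) \<and> l y \<ge> 0)"

end

theory Submission
  imports Defs
begin


lemma kernel_props:
  assumes "kernel_ok l"
  shows "integrable lebesgue l" "l \<in> borel_measurable lebesgue" "(LINT y|lebesgue. l y) = 1"
    "\<And>y. l y \<ge> 0" "\<And>y. l (-y) = l y"
  using assms unfolding kernel_ok_def by auto

lemma cont_meas:
  fixes h :: "real \<Rightarrow> real"
  assumes "continuous_on UNIV h"
  shows "h \<in> borel_measurable lebesgue"
  using continuous_imp_measurable_on_sets_lebesgue[OF assms] by simp

lemma kernel_shift_int:
  assumes "kernel_ok l"
  shows "integrable lebesgue (\<lambda>y. l (t - y))"
proof -
  have "integrable lebesgue (\<lambda>x. l (t + (-1) * x))"
    using lebesgue_integrable_real_affine_iff[of "-1" l t] kernel_props[OF assms] by simp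
  then show ?thesis by simp
qed

lemma int_bdd:
  assumes "kernel_ok l" "continuous_on UNIV h" "\<And>y. \<bar>h y\<bar> \<le> B"
  shows "integrable lebesgue (\<lambda>y. h y * l (t - y))"
proof -
  have i: "integrable lebesgue (\<lambda>y. B * l (t - y))" using kernel_shift_int[OF assms(1)] by simp
  have m: "(\<lambda>y. h y * l (t - y)) \<in> borel_measurable lebesgue"
    using cont_meas[OF assms(2)] kernel_shift_int[OF assms(1)] borel_measurable_integrable by measurable
  have a: "AE x in lebesgue. norm (h x * l (t - x)) \<le> norm (B * l (t - x))"
  proof (rule AE_I2)
    fix x
    have "\<bar>h x\<bar> * l (t - x) \<le> \<bar>B\<bar> * l (t - x)"
      using assms(3)[of x] kernel_props(4)[OF assms(1)] by (intro mult_right_mono) auto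
    then show "norm (h x * l (t - x)) \<le> norm (B * l (t - x))"
      using kernel_props(4)[OF assms(1)] by (simp add: abs_mult)
  qed
  show ?thesis by (rule Bochner_Integration.integrable_bound[OF i m a])
qed


definition cv :: "(real \<Rightarrow> real) \<Rightarrow> (real \<Rightarrow> real) \<Rightarrow> real \<Rightarrow> real" where
  "cv l h t = (LINT y|lebesgue. h y * l (t - y))"

lemma cv_swap:
  fixes h :: "real \<Rightarrow> real"
  shows "cv l h t = (LINT y|lebesgue. h (t - y) * l y)"
  unfolding cv_def
  using lebesgue_integral_real_affine[of "-1" "\<lambda>y. h y * l (t - y)" t] by simp

lemma cv_one:
  assumes "kernel_ok l"
  shows "cv l (\<lambda>_. 1) t = 1"
  using cv_swap[of l "\<lambda>_. 1" t] kernel_props[OF assms] by simp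

lemma cv_lin:
  assumes "kernel_ok l" "continuous_on UNIV h" "\<And>y. \<bar>h y\<bar> \<le> B"
  shows "cv l (\<lambda>y. a + b * h y) t = a + b * cv l h t"
proof -
  have i1: "integrable lebesgue (\<lambda>y. a * l (t - y))" using kernel_shift_int[OF assms(1)] by simp
  have i2: "integrable lebesgue (\<lambda>y. b * (h y * l (t - y)))" using int_bdd[OF assms] by simp
  have "cv l (\<lambda>y. a + b * h y) t = (LINT y|lebesgue. a * l (t - y) + b * (h y * l (t - y)))"
    unfolding cv_def by (simp add: algebra_simps)
  also have "\<dots> = (LINT y|lebesgue. a * l (t - y)) + (LINT y|lebesgue. b * (h y * l (t - y)))"
    by (rule Bochner_Integration.integral_add[OF i1 i2])
  also have "(LINT y|lebesgue. a * l (t - y)) = a * cv l (\<lambda>_. 1) t"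
    unfolding cv_def by simp
  also have "(LINT y|lebesgue. b * (h y * l (t - y))) = b * cv l h t"
    unfolding cv_def by simp
  finally show ?thesis using cv_one[OF assms(1)] by simp
qed

lemma cv_mono:
  assumes "kernel_ok l" "continuous_on UNIV h" "\<And>y. \<bar>h y\<bar> \<le> B"
    "continuous_on UNIV h'" "\<And>y. \<bar>h' y\<bar> \<le> B'" "\<And>y. h y \<le> h' y"
  shows "cv l h t \<le> cv l h' t"
  unfolding cv_def
proof (rule Bochner_Integration.integral_mono[OF int_bdd[OF assms(1-3)] int_bdd[OF assms(1,4,5)]])
  fix y show "h y * l (t - y) \<le> h' y * l (t - y)"
    using assms(6) kernel_props(4)[OF assms(1)] by (intro mult_right_mono) auto
qed

lemma cv_nonneg:
  assumes "kernel_ok l" "\<And>y. h y \<ge> 0"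
  shows "cv l h t \<ge> 0"
  unfolding cv_def using assms kernel_props(4)[OF assms(1)] by (intro integral_nonneg_AE) auto

lemma cv_cont:
  assumes "kernel_ok l" "continuous_on UNIV h" "\<And>y. \<bar>h y\<bar> \<le> B"
  shows "continuous_on UNIV (cv l h)"
proof (rule continuous_at_imp_continuous_on, intro ballI)
  fix t0 :: real
  show "isCont (cv l h) t0"
  proof (rule continuous_at_sequentiallyI)
    fix u :: "nat \<Rightarrow> real" assume u: "u \<longlonglongrightarrow> t0"
    have hm: "h \<in> borel_measurable lebesgue" by (rule cont_meas[OF assms(2)])
    have lm: "l \<in> borel_measurable lebesgue" by (rule kernel_props(2)[OF assms(1)])
    have hc: "continuous_on UNIV (\<lambda>y. h (s - y))" for s
      by (intro continuous_on_compose2[OF assms(2)] continuous_intros) auto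
    have "(\<lambda>n. LINT y|lebesgue. h (u n - y) * l y) \<longlonglongrightarrow> (LINT y|lebesgue. h (t0 - y) * l y)"
    proof (rule integral_dominated_convergence[where w="\<lambda>y. B * l y"])
      show "(\<lambda>y. h (t0 - y) * l y) \<in> borel_measurable lebesgue"
        using cont_meas[OF hc[of t0]] lm by (rule borel_measurable_times)
      show "(\<lambda>y. h (u n - y) * l y) \<in> borel_measurable lebesgue" for n
        using cont_meas[OF hc[of "u n"]] lm by (rule borel_measurable_times)
      show "integrable lebesgue (\<lambda>y. B * l y)" using kernel_props(1)[OF assms(1)] by simp
      show "AE y in lebesgue. (\<lambda>n. h (u n - y) * l y) \<longlonglongrightarrow> h (t0 - y) * l y"
      proof (rule AE_I2)
        fix y
        have "(\<lambda>n. u n - y) \<longlonglongrightarrow> t0 - y" by (intro tendsto_intros u)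
        then have "(\<lambda>n. h (u n - y)) \<longlonglongrightarrow> h (t0 - y)"
          by (rule continuous_on_tendsto_compose[OF assms(2)]) auto
        then show "(\<lambda>n. h (u n - y) * l y) \<longlonglongrightarrow> h (t0 - y) * l y" by (intro tendsto_intros)
      qed
      show "AE y in lebesgue. norm (h (u n - y) * l y) \<le> B * l y" for n
      proof (rule AE_I2)
        fix y
        show "norm (h (u n - y) * l y) \<le> B * l y"
          using assms(3)[of "u n - y"] kernel_props(4)[OF assms(1), of y]
          by (simp add: abs_mult mult_right_mono)
      qed
    qed
    then show "(\<lambda>n. cv l h (u n)) \<longlonglongrightarrow> cv l h t0" by (simp add: cv_swap)
  qed
qed



definition eta :: "real \<Rightarrow> real \<Rightarrow> real" where
  "eta L t = cos (pi * max (-(L/2)) (min (L/2) t) / L)"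

lemma eta_in: assumes "\<bar>t\<bar> \<le> L/2" shows "eta L t = cos (pi * t / L)"
proof -
  have "max (-(L/2)) (min (L/2) t) = t" using assms by auto
  then show ?thesis unfolding eta_def by simp
qed

lemma eta_out: assumes "L > 0" "\<bar>t\<bar> \<ge> L/2" shows "eta L t = 0"
proof -
  have "max (-(L/2)) (min (L/2) t) = L/2 \<or> max (-(L/2)) (min (L/2) t) = -(L/2)"
    using assms by (auto simp: max_def min_def)
  then show ?thesis using assms unfolding eta_def by auto
qed

lemma eta_bounds: assumes "L > 0" shows "0 \<le> eta L t" "eta L t \<le> 1"
proof -
  have "-(L/2) \<le> max (-(L/2)) (min (L/2) t)" "max (-(L/2)) (min (L/2) t) \<le> L/2"
    using assms by auto
  then have "-(1/2) \<le> max (-(L/2)) (min (L/2) t) / L" "max (-(L/2)) (min (L/2) t) / L \<le> 1/2"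
    using assms by (auto simp: field_simps)
  then have "pi * (-(1/2)) \<le> pi * (max (-(L/2)) (min (L/2) t) / L)"
        "pi * (max (-(L/2)) (min (L/2) t) / L) \<le> pi * (1/2)"
    by (intro mult_left_mono; simp)+
  then have "-(pi/2) \<le> pi * max (-(L/2)) (min (L/2) t) / L"
        "pi * max (-(L/2)) (min (L/2) t) / L \<le> pi/2" by auto
  then show "0 \<le> eta L t" unfolding eta_def by (rule cos_ge_zero)
  show "eta L t \<le> 1" unfolding eta_def by simp
qed

lemma eta_abs: "\<bar>eta L t\<bar> \<le> 1"
  unfolding eta_def by simp

lemma eta_zero: "L > 0 \<Longrightarrow> eta L 0 = 1"
  using eta_in[of 0 L] by simp

lemma eta_cont: "L > 0 \<Longrightarrow> continuous_on UNIV (eta L)"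
  unfolding eta_def by (intro continuous_intros) auto

lemma eta_lip: assumes "L > 0" shows "\<bar>eta L x - eta L y\<bar> \<le> pi / L * \<bar>x - y\<bar>"
proof -
  define cx where "cx = max (-(L/2)) (min (L/2) x)"
  define cy where "cy = max (-(L/2)) (min (L/2) y)"
  have c: "\<bar>cx - cy\<bar> \<le> \<bar>x - y\<bar>" unfolding cx_def cy_def by (auto simp: max_def min_def)
  have "\<bar>cos (pi * cx / L) - cos (pi * cy / L)\<bar> \<le> \<bar>pi * cx / L - pi * cy / L\<bar>"
  proof -
    have "\<bar>cos a - cos b\<bar> \<le> \<bar>a - b\<bar>" for a b :: real
    proof -
      have "cos a - cos b = 2 * sin ((a + b) / 2) * sin ((b - a) / 2)"
        by (simp add: cos_diff_cos)
      then have "\<bar>cos a - cos b\<bar> = 2 * \<bar>sin ((a + b) / 2)\<bar> * \<bar>sin ((b - a) / 2)\<bar>"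
        by (simp add: abs_mult)
      also have "\<dots> \<le> 2 * 1 * \<bar>(b - a) / 2\<bar>"
        by (intro mult_mono abs_sin_x_le_abs_x) auto
      finally show ?thesis by simp
    qed
    then show ?thesis by blast
  qed
  also have "\<dots> = pi / L * \<bar>cx - cy\<bar>"
  proof -
    have "pi * cx / L - pi * cy / L = pi / L * (cx - cy)" by (simp add: diff_divide_distrib right_diff_distrib)
    moreover have "\<bar>pi / L * (cx - cy)\<bar> = pi / L * \<bar>cx - cy\<bar>" using assms by (simp add: abs_mult)
    ultimately show ?thesis by simp
  qed
  also have "\<dots> \<le> pi / L * \<bar>x - y\<bar>" using c assms by (intro mult_left_mono) auto
  finally show ?thesis unfolding eta_def cx_def cy_def .
qed

lemma eta_even: assumes "L > 0" shows "eta L (-t) = eta L t"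
proof -
  have "max (-(L/2)) (min (L/2) (-t)) = - max (-(L/2)) (min (L/2) t)" using assms by (auto simp: max_def min_def)
  then show ?thesis unfolding eta_def by simp
qed

lemma eta_ge_cos: assumes "L > 0" "\<bar>t\<bar> \<le> 3*L/2" shows "cos (pi * t / L) \<le> eta L t"
proof (cases "\<bar>t\<bar> \<le> L/2")
  case True then show ?thesis using eta_in[OF True] by simp
next
  case False
  then have e: "eta L t = 0" using eta_out[OF assms(1)] by auto
  have "cos (pi * t / L) = cos (pi * \<bar>t\<bar> / L)" 
  proof (cases "t \<ge> 0")
    case False
    then have "\<bar>t\<bar> = - t" by simp
    then show ?thesis by simp
  qed simp
  also have "\<dots> = - cos (pi * \<bar>t\<bar> / L - pi)" by simp
  also have "\<dots> \<le> 0"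
  proof -
    have "-(pi/2) \<le> pi * \<bar>t\<bar> / L - pi" "pi * \<bar>t\<bar> / L - pi \<le> pi/2"
      using False assms by (auto simp: field_simps)
    then have "0 \<le> cos (pi * \<bar>t\<bar> / L - pi)" by (rule cos_ge_zero)
    then show ?thesis by simp
  qed
  finally show ?thesis using e by simp
qed



lemma ind_meas: "(\<lambda>y::real. indicator {a..b} y :: real) \<in> borel_measurable lebesgue"
  by (intro borel_measurable_indicator) simp

lemma int_meas_bdd:
  assumes "kernel_ok l" "h \<in> borel_measurable lebesgue" "\<And>y. \<bar>h y\<bar> \<le> B"
  shows "integrable lebesgue (\<lambda>y. h y * l y)"
proof -
  have i: "integrable lebesgue (\<lambda>y. B * l y)" using kernel_props(1)[OF assms(1)] by simp
  have m: "(\<lambda>y. h y * l y) \<in> borel_measurable lebesgue"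
    using assms(2) kernel_props(2)[OF assms(1)] by (rule borel_measurable_times)
  have a: "AE x in lebesgue. norm (h x * l x) \<le> norm (B * l x)"
  proof (rule AE_I2)
    fix x
    have "\<bar>h x\<bar> * l x \<le> \<bar>B\<bar> * l x"
      using assms(3)[of x] kernel_props(4)[OF assms(1)] by (intro mult_right_mono) auto
    then show "norm (h x * l x) \<le> norm (B * l x)"
      using kernel_props(4)[OF assms(1)] by (simp add: abs_mult)
  qed
  show ?thesis by (rule Bochner_Integration.integrable_bound[OF i m a])
qed

lemma divL_eq: "(\<lambda>y::real. pi * y / L) = (\<lambda>y. (pi / L) * y)"
  by (auto simp: times_divide_eq_left)

lemma cont_cosL: "continuous_on UNIV (\<lambda>y. cos (pi * y / L))"
  unfolding divL_eq[unfolded fun_eq_iff, rule_format] by (intro continuous_intros)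

lemma cont_sinL: "continuous_on UNIV (\<lambda>y. \<bar>sin (pi * y / L)\<bar>)"
  unfolding divL_eq[unfolded fun_eq_iff, rule_format] by (intro continuous_intros)

definition mK :: "(real \<Rightarrow> real) \<Rightarrow> real \<Rightarrow> real" where
  "mK l L = (LINT y|lebesgue. (indicator {-(L/2)..L/2} y * cos (pi * y / L)) * l y)"
definition sK :: "(real \<Rightarrow> real) \<Rightarrow> real \<Rightarrow> real" where
  "sK l L = (LINT y|lebesgue. (indicator {-(L/2)..L/2} y * \<bar>sin (pi * y / L)\<bar>) * l y)"

lemma fm_int: assumes "kernel_ok l"
  shows "integrable lebesgue (\<lambda>y. (indicator {-(L/2)..L/2} y * cos (pi * y / L)) * l y)"
proof (rule int_meas_bdd[OF assms, where B=1])
  show "(\<lambda>y. indicator {-(L/2)..L/2} y * cos (pi * y / L)) \<in> borel_measurable lebesgue"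
    using ind_meas cont_meas[OF cont_cosL] by (intro borel_measurable_times)
  show "\<bar>indicator {-(L/2)..L/2} y * cos (pi * y / L)\<bar> \<le> 1" for y
    by (auto simp: indicator_def)
qed

lemma fs_int: assumes "kernel_ok l"
  shows "integrable lebesgue (\<lambda>y. (indicator {-(L/2)..L/2} y * \<bar>sin (pi * y / L)\<bar>) * l y)"
proof (rule int_meas_bdd[OF assms, where B=1])
  show "(\<lambda>y. indicator {-(L/2)..L/2} y * \<bar>sin (pi * y / L)\<bar>) \<in> borel_measurable lebesgue"
    using ind_meas cont_meas[OF cont_sinL] by (intro borel_measurable_times)
  show "\<bar>indicator {-(L/2)..L/2} y * \<bar>sin (pi * y / L)\<bar>\<bar> \<le> 1" for y
    by (auto simp: indicator_def)
qed

lemma pointwise_est: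
  assumes "L > 0" "\<bar>x\<bar> \<le> L" "0 \<le> \<tau>" "\<tau> \<le> 1"
  shows "indicator {-(L/2)..L/2} y * ((1+\<tau>) * cos (pi*x/L) * cos (pi*y/L)
           + (1-\<tau>) * \<bar>sin (pi*x/L)\<bar> * \<bar>sin (pi*y/L)\<bar>) \<le> eta L (x - y) + eta L (x + y)"
proof (cases "\<bar>y\<bar> \<le> L/2")
  case False
  then have "indicator {-(L/2)..L/2} y = (0::real)" by (auto simp: indicator_def)
  then show ?thesis using eta_bounds[OF assms(1)] by (simp add: add_nonneg_nonneg)
next
  case True
  then have ind: "indicator {-(L/2)..L/2} y = (1::real)" by (auto simp: indicator_def)
  define u where "u = pi*x/L"
  define v where "v = pi*y/L"
  have e1: "cos u * cos v + sin u * sin v \<le> eta L (x - y)"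
  proof -
    have "cos (pi * (x - y) / L) \<le> eta L (x - y)" using True assms abs_triangle_ineq4[of x y] by (intro eta_ge_cos) auto
    moreover have "pi * (x - y) / L = u - v" unfolding u_def v_def by (simp add: diff_divide_distrib right_diff_distrib)
    ultimately show ?thesis by (simp add: cos_diff)
  qed
  have e2: "cos u * cos v - sin u * sin v \<le> eta L (x + y)"
  proof -
    have "cos (pi * (x + y) / L) \<le> eta L (x + y)" using True assms abs_triangle_ineq[of x y] by (intro eta_ge_cos) auto
    moreover have "pi * (x + y) / L = u + v" unfolding u_def v_def by (simp add: add_divide_distrib distrib_left)
    ultimately show ?thesis by (simp add: cos_add)
  qed
  have p1: "eta L (x - y) \<ge> 0" "eta L (x + y) \<ge> 0" using eta_bounds[OF assms(1)] by auto
  have s: "\<bar>sin u\<bar> * \<bar>sin v\<bar> = \<bar>sin u * sin v\<bar>" by (simp add: abs_mult)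
  have A: "2 * (cos u * cos v) \<le> eta L (x - y) + eta L (x + y)" using e1 e2 by linarith
  have B: "cos u * cos v + \<bar>sin u\<bar> * \<bar>sin v\<bar> \<le> eta L (x - y) + eta L (x + y)"
    using e1 e2 p1 unfolding s by (cases "sin u * sin v \<ge> 0") auto
  have "(1+\<tau>) * cos u * cos v + (1-\<tau>) * \<bar>sin u\<bar> * \<bar>sin v\<bar>
        = \<tau> * (2 * (cos u * cos v)) + (1 - \<tau>) * (cos u * cos v + \<bar>sin u\<bar> * \<bar>sin v\<bar>)"
    by (simp add: algebra_simps)
  also have "\<dots> \<le> \<tau> * (eta L (x - y) + eta L (x + y)) + (1 - \<tau>) * (eta L (x - y) + eta L (x + y))"
    using assms(3,4) by (intro add_mono[OF mult_left_mono[OF A] mult_left_mono[OF B]]) auto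
  also have "\<dots> = eta L (x - y) + eta L (x + y)" by (simp add: algebra_simps)
  finally show ?thesis unfolding ind u_def v_def by simp
qed


lemma cv_eta_reflect:
  assumes "kernel_ok l" "L > 0"
  shows "cv l (eta L) x = (LINT y|lebesgue. eta L (x + y) * l y)"
proof -
  have "cv l (eta L) x = (LINT y|lebesgue. eta L (x - y) * l y)" by (rule cv_swap)
  also have "\<dots> = (LINT y|lebesgue. eta L (x - (0 + -1 * y)) * l (0 + -1 * y))"
    using lebesgue_integral_real_affine[of "-1" "\<lambda>y. eta L (x - y) * l y" 0] by simp
  also have "\<dots> = (LINT y|lebesgue. eta L (x + y) * l y)"
    using kernel_props(5)[OF assms(1)] by simp
  finally show ?thesis .
qed

lemma eta_shift_int:
  assumes "kernel_ok l" "L > 0"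
  shows "integrable lebesgue (\<lambda>y. eta L (x + s * y) * l y)"
proof (rule int_meas_bdd[OF assms(1), where B=1])
  show "(\<lambda>y. eta L (x + s * y)) \<in> borel_measurable lebesgue"
    by (rule cont_meas) (intro continuous_on_compose2[OF eta_cont[OF assms(2)]] continuous_intros; auto)
  show "\<bar>eta L (x + s * y)\<bar> \<le> 1" for y by (rule eta_abs)
qed

lemma integrated_est:
  assumes "kernel_ok l" "L > 0" "\<bar>x\<bar> \<le> L" "0 \<le> \<tau>" "\<tau> \<le> 1"
  shows "(1+\<tau>) * cos (pi*x/L) * mK l L + (1-\<tau>) * \<bar>sin (pi*x/L)\<bar> * sK l L \<le> 2 * cv l (eta L) x"
proof -
  define a where "a = (1+\<tau>) * cos (pi*x/L)"
  define b where "b = (1-\<tau>) * \<bar>sin (pi*x/L)\<bar>"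
  have i1: "integrable lebesgue (\<lambda>y. eta L (x - y) * l y)"
    using eta_shift_int[OF assms(1,2), of x "-1"] by simp
  have i2: "integrable lebesgue (\<lambda>y. eta L (x + y) * l y)"
    using eta_shift_int[OF assms(1,2), of x 1] by simp
  have "2 * cv l (eta L) x = (LINT y|lebesgue. eta L (x - y) * l y) + (LINT y|lebesgue. eta L (x + y) * l y)"
    using cv_swap[of l "eta L" x] cv_eta_reflect[OF assms(1,2), of x] by simp
  also have "\<dots> = (LINT y|lebesgue. eta L (x - y) * l y + eta L (x + y) * l y)"
    by (rule Bochner_Integration.integral_add[OF i1 i2, symmetric])
  finally have E: "2 * cv l (eta L) x = (LINT y|lebesgue. eta L (x - y) * l y + eta L (x + y) * l y)" .
  have j1: "integrable lebesgue (\<lambda>y. a * ((indicator {-(L/2)..L/2} y * cos (pi * y / L)) * l y))"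
    using fm_int[OF assms(1), of L] by simp
  have j2: "integrable lebesgue (\<lambda>y. b * ((indicator {-(L/2)..L/2} y * \<bar>sin (pi * y / L)\<bar>) * l y))"
    using fs_int[OF assms(1), of L] by simp
  have "a * mK l L + b * sK l L = (LINT y|lebesgue. a * ((indicator {-(L/2)..L/2} y * cos (pi * y / L)) * l y))
       + (LINT y|lebesgue. b * ((indicator {-(L/2)..L/2} y * \<bar>sin (pi * y / L)\<bar>) * l y))"
    unfolding mK_def sK_def by simp
  also have "\<dots> = (LINT y|lebesgue. a * ((indicator {-(L/2)..L/2} y * cos (pi * y / L)) * l y)
       + b * ((indicator {-(L/2)..L/2} y * \<bar>sin (pi * y / L)\<bar>) * l y))"
    by (rule Bochner_Integration.integral_add[OF j1 j2, symmetric])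
  also have "\<dots> \<le> (LINT y|lebesgue. eta L (x - y) * l y + eta L (x + y) * l y)"
  proof (rule Bochner_Integration.integral_mono)
    show "integrable lebesgue (\<lambda>y. a * ((indicator {-(L/2)..L/2} y * cos (pi * y / L)) * l y)
       + b * ((indicator {-(L/2)..L/2} y * \<bar>sin (pi * y / L)\<bar>) * l y))" using j1 j2 by simp
    show "integrable lebesgue (\<lambda>y. eta L (x - y) * l y + eta L (x + y) * l y)" using i1 i2 by simp
    fix y
    have "indicator {-(L/2)..L/2} y * ((1+\<tau>) * cos (pi*x/L) * cos (pi*y/L)
           + (1-\<tau>) * \<bar>sin (pi*x/L)\<bar> * \<bar>sin (pi*y/L)\<bar>) \<le> eta L (x - y) + eta L (x + y)"
      by (rule pointwise_est[OF assms(2-5)])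
    then have "(indicator {-(L/2)..L/2} y * ((1+\<tau>) * cos (pi*x/L) * cos (pi*y/L)
           + (1-\<tau>) * \<bar>sin (pi*x/L)\<bar> * \<bar>sin (pi*y/L)\<bar>)) * l y \<le> (eta L (x - y) + eta L (x + y)) * l y"
      using kernel_props(4)[OF assms(1)] by (intro mult_right_mono) auto
    then show "a * ((indicator {-(L/2)..L/2} y * cos (pi * y / L)) * l y)
       + b * ((indicator {-(L/2)..L/2} y * \<bar>sin (pi * y / L)\<bar>) * l y) \<le> eta L (x - y) * l y + eta L (x + y) * l y"
      unfolding a_def b_def by (simp add: algebra_simps)
  qed
  finally show ?thesis using E unfolding a_def b_def by simp
qed


lemma alg_est:
  fixes A B C S Kc Ks :: real
  assumes "1 \<le> Kc" "0 < Ks" "0 \<le> A * C - B * S" "0 \<le> S" "S * (1 + 2 * Kc) \<le> Ks" "1/2 \<le> C" "C \<le> 1"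
  shows "A * C - B * S \<le> Kc * A + Ks * \<bar>B\<bar>"
proof (cases "A \<ge> 0")
  case True
  have "A * C \<le> A * 1" using True assms(7) by (intro mult_left_mono) auto
  also have "\<dots> \<le> A * Kc" using True assms(1) by (intro mult_left_mono) auto
  finally have 1: "A * C \<le> Kc * A" by (simp add: mult.commute)
  have "S * 1 \<le> S * (1 + 2 * Kc)" using assms(1,4) by (intro mult_left_mono) auto
  then have SK: "S \<le> Ks" using assms(5) by simp
  have "- B * S \<le> \<bar>B\<bar> * S" using assms(4) by (intro mult_right_mono) auto
  also have "\<dots> \<le> \<bar>B\<bar> * Ks" using SK by (intro mult_left_mono) auto
  finally have "- B * S \<le> Ks * \<bar>B\<bar>" by (simp add: mult.commute)
  then show ?thesis using 1 by linarith
next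
  case False
  then have A: "A < 0" by simp
  have "B * S \<le> A * C" using assms(3) by simp
  moreover have "A * C < 0" using A assms(6) by (simp add: mult_neg_pos)
  ultimately have BS: "B * S < 0" by linarith
  have B: "B < 0"
  proof (rule ccontr)
    assume "\<not> B < 0"
    then have "0 \<le> B * S" using assms(4) by simp
    then show False using BS by simp
  qed
  have "(-A) * C \<le> (-B) * S" using assms(3) by simp
  moreover have "(-A) * (1/2) \<le> (-A) * C" using A assms(6) by (intro mult_left_mono) auto
  ultimately have "(-A) * (1/2) \<le> (-B) * S" by linarith
  then have "-A \<le> 2 * ((-B) * S)" by linarith
  moreover have "2 * ((-B) * S) = 2 * S * (-B)" by simp
  ultimately have mA: "-A \<le> 2 * S * (-B)" by linarith
  have "(Kc - C) * (-A) \<le> Kc * (-A)" using A assms(6) by (intro mult_right_mono) auto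
  also have "\<dots> \<le> Kc * (2 * S * (-B))" using mA assms(1) by (intro mult_left_mono) auto
  finally have 1: "(Kc - C) * (-A) \<le> Kc * (2 * S * (-B))" .
  have "Kc * (2 * S * (-B)) \<le> (Ks - S) * (-B)"
  proof -
    have "Kc * 2 * S \<le> Ks - S" using assms(5) by (simp add: algebra_simps)
    then have "(Kc * 2 * S) * (-B) \<le> (Ks - S) * (-B)" using B by (intro mult_right_mono) auto
    then show ?thesis by (simp add: algebra_simps)
  qed
  with 1 have "(Kc - C) * (-A) \<le> (Ks - S) * (-B)" by linarith
  then show ?thesis using B by (simp add: algebra_simps)
qed

lemma cos_ge_half: fixes g :: real assumes "0 \<le> g" "g \<le> 1" shows "1/2 \<le> cos g"
proof -
  have "cos (pi/3) \<le> cos g" using assms pi_gt3 by (subst cos_mono_le_eq) auto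
  then show ?thesis by (simp add: cos_60)
qed

lemma kernel_est:
  assumes "kernel_ok l" "L > 0" "0 < \<kappa>" "1 < \<kappa> * mK l L" "0 < sK l L"
  shows "\<exists>c0>0. \<forall>c x. 0 \<le> c \<and> c \<le> c0 \<longrightarrow> eta L (x + c) \<le> \<kappa> * cv l (eta L) x"
proof -
  define m where "m = mK l L"
  define s where "s = sK l L"
  define \<tau> where "\<tau> = max 0 (2 / (\<kappa> * m) - 1)"
  have km: "\<kappa> * m > 1" using assms(4) m_def by simp
  have t0: "0 \<le> \<tau>" "\<tau> < 1" using km unfolding \<tau>_def by (auto simp: field_simps)
  define Kc where "Kc = \<kappa> * m * (1 + \<tau>) / 2"
  define Ks where "Ks = \<kappa> * s * (1 - \<tau>) / 2"
  have Kc1: "1 \<le> Kc"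
  proof (cases "2 / (\<kappa> * m) - 1 \<ge> 0")
    case True
    then have "\<tau> = 2 / (\<kappa> * m) - 1" unfolding \<tau>_def by simp
    moreover have "\<kappa> * m \<noteq> 0" using km by linarith
    ultimately show ?thesis unfolding Kc_def by simp
  next
    case False
    then have "\<tau> = 0" unfolding \<tau>_def by simp
    moreover have "2 \<le> \<kappa> * m" using False km by (simp add: field_simps)
    ultimately show ?thesis unfolding Kc_def by simp
  qed
  have Ks0: "0 < Ks" unfolding Ks_def using assms(3,5) t0 s_def by simp
  define g0 where "g0 = min 1 (Ks / (1 + 2 * Kc))"
  have p: "0 < 1 + 2 * Kc" using Kc1 by simp
  have g0a: "0 < g0" "g0 \<le> 1" using Ks0 p unfolding g0_def by auto
  have "g0 \<le> Ks / (1 + 2 * Kc)" unfolding g0_def by simp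
  then have "g0 * (1 + 2 * Kc) \<le> Ks / (1 + 2 * Kc) * (1 + 2 * Kc)" using p by (intro mult_right_mono) auto
  also have "\<dots> = Ks" using p by simp
  finally have g0: "0 < g0" "g0 \<le> 1" "g0 * (1 + 2 * Kc) \<le> Ks" using g0a by auto
  define c0 where "c0 = L / pi * g0"
  have "c0 > 0" unfolding c0_def using g0 assms(2) by simp
  moreover have "eta L (x + c) \<le> \<kappa> * cv l (eta L) x" if c: "0 \<le> c" "c \<le> c0" for c x
  proof (cases "\<bar>x + c\<bar> \<ge> L/2")
    case True
    then have "eta L (x + c) = 0" using eta_out[OF assms(2)] by simp
    moreover have "0 \<le> cv l (eta L) x" using cv_nonneg[OF assms(1)] eta_bounds[OF assms(2)] by auto
    ultimately show ?thesis using assms(3) by simp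
  next
    case False
    define \<gamma> where "\<gamma> = pi * c / L"
    have \<gamma>: "0 \<le> \<gamma>" "\<gamma> \<le> g0" using c assms(2) unfolding \<gamma>_def c0_def by (auto simp: field_simps)
    have cL: "c \<le> L / 2"
    proof -
      have "L / pi * g0 \<le> L / pi * 1" using g0 assms(2) by (intro mult_left_mono) auto
      then have "c \<le> L / pi" using c unfolding c0_def by simp
      also have "\<dots> \<le> L / 2" using assms(2) pi_gt3 by (intro divide_left_mono) auto
      finally show ?thesis .
    qed
    have xL: "\<bar>x\<bar> \<le> L" using False cL c by linarith
    define u where "u = pi * x / L"
    have ex: "eta L (x + c) = cos (u + \<gamma>)"
    proof -
      have "eta L (x + c) = cos (pi * (x + c) / L)" using False by (intro eta_in) simp
      also have "pi * (x + c) / L = u + \<gamma>" unfolding u_def \<gamma>_def by (simp add: add_divide_distrib distrib_left)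
      finally show ?thesis .
    qed
    have I: "(1+\<tau>) * cos u * m + (1-\<tau>) * \<bar>sin u\<bar> * s \<le> 2 * cv l (eta L) x"
      using integrated_est[OF assms(1,2) xL t0(1)] t0(2) unfolding u_def m_def s_def by simp
    have "Kc * cos u + Ks * \<bar>sin u\<bar> \<le> \<kappa> * cv l (eta L) x"
    proof -
      have "Kc * cos u + Ks * \<bar>sin u\<bar> = \<kappa> / 2 * ((1+\<tau>) * cos u * m + (1-\<tau>) * \<bar>sin u\<bar> * s)"
        unfolding Kc_def Ks_def by (simp add: field_simps)
      also have "\<dots> \<le> \<kappa> / 2 * (2 * cv l (eta L) x)" using I assms(3) by (intro mult_left_mono) auto
      finally show ?thesis by simp
    qed
    moreover have "cos (u + \<gamma>) \<le> Kc * cos u + Ks * \<bar>sin u\<bar>"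
    proof -
      have nn: "0 \<le> cos u * cos \<gamma> - sin u * sin \<gamma>"
        using ex eta_bounds[OF assms(2), of "x + c"] by (simp add: cos_add)
      have "\<gamma> \<le> pi" using \<gamma> g0 pi_gt3 by linarith
      then have sg: "0 \<le> sin \<gamma>" "sin \<gamma> \<le> \<gamma>" using \<gamma> sin_x_le_x[of \<gamma>] sin_ge_zero[of \<gamma>] by auto
      have "sin \<gamma> * (1 + 2 * Kc) \<le> \<gamma> * (1 + 2 * Kc)" using sg Kc1 by (intro mult_right_mono) auto
      also have "\<dots> \<le> g0 * (1 + 2 * Kc)" using \<gamma> Kc1 by (intro mult_right_mono) auto
      finally have "sin \<gamma> * (1 + 2 * Kc) \<le> Ks" using g0 by linarith
      moreover have "1/2 \<le> cos \<gamma>" using \<gamma> g0 by (intro cos_ge_half) auto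
      ultimately have "cos u * cos \<gamma> - sin u * sin \<gamma> \<le> Kc * cos u + Ks * \<bar>sin u\<bar>"
        using alg_est[OF Kc1 Ks0 nn sg(1)] by simp
      then show ?thesis by (simp add: cos_add)
    qed
    ultimately show ?thesis using ex by simp
  qed
  ultimately show ?thesis by blast
qed



lemma mK_lim:
  assumes "kernel_ok l"
  shows "(\<lambda>n. mK l (real n)) \<longlonglongrightarrow> 1"
proof -
  have "(\<lambda>n. LINT y|lebesgue. (indicator {-(real n/2)..real n/2} y * cos (pi * y / real n)) * l y)
        \<longlonglongrightarrow> (LINT y|lebesgue. l y)"
  proof (rule integral_dominated_convergence[where w=l])
    show "l \<in> borel_measurable lebesgue" by (rule kernel_props(2)[OF assms])
    show "(\<lambda>y. (indicator {-(real n/2)..real n/2} y * cos (pi * y / real n)) * l y) \<in> borel_measurable lebesgue" for n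
      using fm_int[OF assms, of "real n"] by (rule borel_measurable_integrable)
    show "integrable lebesgue l" by (rule kernel_props(1)[OF assms])
    show "AE y in lebesgue. (\<lambda>n. (indicator {-(real n/2)..real n/2} y * cos (pi * y / real n)) * l y) \<longlonglongrightarrow> l y"
    proof (rule AE_I2)
      fix y :: real
      have ev: "eventually (\<lambda>n. cos (pi * y / real n) * l y = (indicator {-(real n/2)..real n/2} y * cos (pi * y / real n)) * l y) sequentially"
      proof -
        obtain N :: nat where N: "2 * \<bar>y\<bar> \<le> real N" using real_arch_simple by blast
        show ?thesis unfolding eventually_sequentially
        proof (intro exI allI impI)
          fix n assume "N \<le> n"
          then have "2 * \<bar>y\<bar> \<le> real n" using N by linarith
          then have "y \<in> {-(real n/2)..real n/2}" by auto
          then show "cos (pi * y / real n) * l y = (indicator {-(real n/2)..real n/2} y * cos (pi * y / real n)) * l y"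
            by simp
        qed
      qed
      have "(\<lambda>n. cos (pi * y / real n) * l y) \<longlonglongrightarrow> cos 0 * l y"
        by (intro tendsto_intros)
      then have "(\<lambda>n. cos (pi * y / real n) * l y) \<longlonglongrightarrow> l y" by simp
      then show "(\<lambda>n. (indicator {-(real n/2)..real n/2} y * cos (pi * y / real n)) * l y) \<longlonglongrightarrow> l y"
        using ev by (rule Lim_transform_eventually)
    qed
    show "AE y in lebesgue. norm ((indicator {-(real n/2)..real n/2} y * cos (pi * y / real n)) * l y) \<le> l y" for n
    proof (rule AE_I2)
      fix y
      have "\<bar>indicator {-(real n/2)..real n/2} y * cos (pi * y / real n)\<bar> \<le> (1::real)"
        by (auto simp: indicator_def)
      then have "\<bar>indicator {-(real n/2)..real n/2} y * cos (pi * y / real n)\<bar> * l y \<le> 1 * l y"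
        using kernel_props(4)[OF assms] by (intro mult_right_mono) auto
      then show "norm ((indicator {-(real n/2)..real n/2} y * cos (pi * y / real n)) * l y) \<le> l y"
        using kernel_props(4)[OF assms, of y] by (simp add: abs_mult)
    qed
  qed
  then show ?thesis using kernel_props(3)[OF assms] unfolding mK_def by simp
qed

lemma pi_frac: assumes "0 < a" "a < L" shows "0 < pi * a / L" "pi * a / L < pi"
proof -
  have L: "L > 0" using assms by simp
  show "0 < pi * a / L" using assms L by simp
  have "a / L < 1" using assms L by simp
  then have "pi * (a / L) < pi * 1" by (intro mult_strict_left_mono) auto
  then show "pi * a / L < pi" by simp
qed

lemma sK_pos:
  assumes "kernel_ok l" "L > 0" "mK l L \<noteq> 0"
  shows "sK l L > 0"
proof -
  let ?fs = "\<lambda>y. (indicator {-(L/2)..L/2} y * \<bar>sin (pi * y / L)\<bar>) * l y"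
  let ?fm = "\<lambda>y. (indicator {-(L/2)..L/2} y * cos (pi * y / L)) * l y"
  have nn: "AE y in lebesgue. 0 \<le> ?fs y"
    using kernel_props(4)[OF assms(1)] by (intro AE_I2) (auto simp: indicator_def)
  have ge: "sK l L \<ge> 0" unfolding sK_def by (rule integral_nonneg_AE[OF nn])
  have "sK l L \<noteq> 0"
  proof
    assume "sK l L = 0"
    then have "AE y in lebesgue. ?fs y = 0"
      using integral_nonneg_eq_0_iff_AE[OF fs_int[OF assms(1)] nn] unfolding sK_def by simp
    moreover have "AE y in lebesgue. y \<noteq> 0"
      by (rule AE_completion[OF AE_lborel_singleton])
    ultimately have "AE y in lebesgue. ?fm y = 0"
    proof eventually_elim
      case (elim y)
      show ?case
      proof (cases "y \<in> {-(L/2)..L/2}")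
        case False then show ?thesis by simp
      next
        case True
        have "sin (pi * y / L) \<noteq> 0"
        proof (cases "y > 0")
          case pos: True
          have yy: "0 < y" "y < L" using True pos assms(2) by auto
          have "0 < pi * y / L" "pi * y / L < pi" using pi_frac[OF yy] by auto
          then have "sin (pi * y / L) > 0" by (rule sin_gt_zero)
          then show ?thesis by simp
        next
          case False
          then have yn: "y < 0" using elim by simp
          have yy: "0 < -y" "-y < L" using True yn assms(2) by auto
          have "0 < pi * (-y) / L" "pi * (-y) / L < pi" using pi_frac[OF yy] by auto
          then have "sin (pi * (-y) / L) > 0" by (rule sin_gt_zero)
          then show ?thesis by simp
        qed
        then have "l y = 0" using elim True by simp
        then show ?thesis by simp
      qed
    qed
    then have "mK l L = 0" unfolding mK_def by (rule integral_eq_zero_AE)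
    then show False using assms(3) by simp
  qed
  then show ?thesis using ge by simp
qed

lemma choose_L:
  assumes "kernel_ok l1" "kernel_ok l2" "1 < \<kappa>"
  shows "\<exists>L>0. 1 < \<kappa> * mK l1 L \<and> 1 < \<kappa> * mK l2 L \<and> 0 < sK l1 L \<and> 0 < sK l2 L"
proof -
  have lim: "(\<lambda>n. \<kappa> * mK l (real n)) \<longlonglongrightarrow> \<kappa> * 1" if "kernel_ok l" for l
    by (intro tendsto_intros mK_lim that)
  have ev: "eventually (\<lambda>n. 1 < \<kappa> * mK l (real n)) sequentially" if "kernel_ok l" for l
    using order_tendstoD(1)[OF lim[OF that]] assms(3) by simp
  obtain N where "\<forall>n\<ge>N. (1 < \<kappa> * mK l1 (real n) \<and> 1 < \<kappa> * mK l2 (real n)) \<and> n > 0"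
    using eventually_conj[OF eventually_conj[OF ev[OF assms(1)] ev[OF assms(2)]] eventually_gt_at_top[of 0]]
    unfolding eventually_sequentially by blast
  then obtain n where n: "1 < \<kappa> * mK l1 (real n)" "1 < \<kappa> * mK l2 (real n)" "n > 0" by blast
  have "mK l1 (real n) \<noteq> 0" "mK l2 (real n) \<noteq> 0" using n by auto
  then show ?thesis using n sK_pos[OF assms(1)] sK_pos[OF assms(2)]
    by (intro exI[of _ "real n"]) auto
qed



definition g1 :: "real \<Rightarrow> real \<Rightarrow> state \<Rightarrow> real" where
  "g1 r1 a1 p = (1 - fst p) * exp (r1 * (fst p - a1 * snd p))"
definition G2 :: "real \<Rightarrow> real \<Rightarrow> state \<Rightarrow> real" where
  "G2 r2 a2 p = snd p * exp (r2 * (1 - a2 - snd p + a2 * fst p))"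

lemma Qop_eq: "Qop r1 r2 a1 a2 l1 l2 U = (\<lambda>t. (1 - cv l1 (\<lambda>y. g1 r1 a1 (U y)) t, cv l2 (\<lambda>y. G2 r2 a2 (U y)) t))"
  unfolding Qop_def cv_def g1_def G2_def by simp

lemma h1_mono:
  fixes r p p' :: real
  assumes "0 < r" "r < 1" "0 \<le> p" "p \<le> p'" "p' \<le> 1"
  shows "(1 - p') * exp (r * p') \<le> (1 - p) * exp (r * p)"
proof -
  define d where "d = p' - p"
  have d: "0 \<le> d" using assms d_def by simp
  have "1 - r * d \<le> exp (- (r * d))" using exp_ge_add_one_self[of "- (r * d)"] by simp
  then have "(1 - p) * (1 - r * d) \<le> (1 - p) * exp (- (r * d))" using assms by (intro mult_left_mono) auto
  moreover have "1 - p' \<le> (1 - p) * (1 - r * d)"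
  proof -
    have "r * (1 - p) \<le> 1" using assms by (smt (verit) mult_le_one)
    then have "(r * (1 - p)) * d \<le> 1 * d" using d by (intro mult_right_mono) auto
    then show ?thesis unfolding d_def by (simp add: algebra_simps)
  qed
  ultimately have "1 - p' \<le> (1 - p) * exp (- (r * d))" by linarith
  then have "(1 - p') * exp (r * p') \<le> (1 - p) * exp (- (r * d)) * exp (r * p')"
    by (intro mult_right_mono) auto
  also have "\<dots> = (1 - p) * exp (r * p)"
    by (simp add: mult.assoc exp_add[symmetric] d_def algebra_simps)
  finally show ?thesis .
qed

lemma h2_mono:
  fixes r q q' :: real
  assumes "0 < r" "r < 1" "0 \<le> q" "q \<le> q'" "q' \<le> 1"
  shows "q * exp (- (r * q)) \<le> q' * exp (- (r * q'))"
proof -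
  define d where "d = q' - q"
  have d: "0 \<le> d" using assms d_def by simp
  have "1 - r * d \<le> exp (- (r * d))" using exp_ge_add_one_self[of "- (r * d)"] by simp
  then have "q' * (1 - r * d) \<le> q' * exp (- (r * d))" using assms by (intro mult_left_mono) auto
  moreover have "q \<le> q' * (1 - r * d)"
  proof -
    have "r * q' \<le> 1" using assms by (smt (verit) mult_le_one)
    then have "(r * q') * d \<le> 1 * d" using d by (intro mult_right_mono) auto
    then show ?thesis unfolding d_def by (simp add: algebra_simps)
  qed
  ultimately have "q \<le> q' * exp (- (r * d))" by linarith
  then have "q * exp (- (r * q)) \<le> q' * exp (- (r * d)) * exp (- (r * q))"
    by (intro mult_right_mono) auto
  also have "\<dots> = q' * exp (- (r * q'))"
    by (simp add: mult.assoc exp_add[symmetric] d_def algebra_simps)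
  finally show ?thesis .
qed

lemma g1_mono:
  assumes "0 < r1" "r1 < 1" "0 < a1" "0 \<le> fst p" "fst p \<le> fst p'" "fst p' \<le> 1" "snd p \<le> snd p'"
  shows "g1 r1 a1 p' \<le> g1 r1 a1 p"
proof -
  have "g1 r1 a1 p' = (1 - fst p') * exp (r1 * fst p') * exp (- (r1 * a1 * snd p'))"
    unfolding g1_def by (simp add: mult.assoc exp_add[symmetric] algebra_simps)
  also have "\<dots> \<le> (1 - fst p') * exp (r1 * fst p') * exp (- (r1 * a1 * snd p))"
    using assms by (intro mult_left_mono) (auto intro!: mult_nonneg_nonneg)
  also have "\<dots> \<le> (1 - fst p) * exp (r1 * fst p) * exp (- (r1 * a1 * snd p))"
    using h1_mono[OF assms(1,2,4,5,6)] by (intro mult_right_mono) auto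
  also have "\<dots> = g1 r1 a1 p"
    unfolding g1_def by (simp add: mult.assoc exp_add[symmetric] algebra_simps)
  finally show ?thesis .
qed

lemma G2_mono:
  assumes "0 < r2" "r2 < 1" "0 < a2" "fst p \<le> fst p'" "0 \<le> snd p" "snd p \<le> snd p'" "snd p' \<le> 1"
  shows "G2 r2 a2 p \<le> G2 r2 a2 p'"
proof -
  have "G2 r2 a2 p = snd p * exp (- (r2 * snd p)) * exp (r2 * (1 - a2 + a2 * fst p))"
    unfolding G2_def by (simp add: mult.assoc exp_add[symmetric] algebra_simps)
  also have "\<dots> \<le> snd p * exp (- (r2 * snd p)) * exp (r2 * (1 - a2 + a2 * fst p'))"
    using assms by (intro mult_left_mono) (auto intro!: mult_nonneg_nonneg)
  also have "\<dots> \<le> snd p' * exp (- (r2 * snd p')) * exp (r2 * (1 - a2 + a2 * fst p'))"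
    using h2_mono[OF assms(1,2,5,6,7)] by (intro mult_right_mono) auto
  also have "\<dots> = G2 r2 a2 p'"
    unfolding G2_def by (simp add: mult.assoc exp_add[symmetric] algebra_simps)
  finally show ?thesis .
qed

lemma up_est:
  fixes k b s \<kappa> :: real
  assumes "0 \<le> k" "0 \<le> b" "0 \<le> s" "\<kappa> \<le> 1 + k * b"
  shows "k + \<kappa> * s \<le> (k + s) * exp (b * s)"
proof -
  have "(k + s) * (1 + b * s) \<le> (k + s) * exp (b * s)"
    using assms by (intro mult_left_mono) auto
  moreover have "k + \<kappa> * s \<le> (k + s) * (1 + b * s)"
  proof -
    have "\<kappa> * s \<le> (1 + k * b) * s" using assms by (intro mult_right_mono) auto
    moreover have "0 \<le> b * s * s" using assms by simp
    ultimately show ?thesis by (simp add: algebra_simps)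
  qed
  ultimately show ?thesis by linarith
qed

lemma down_est:
  fixes k b s \<kappa> :: real
  assumes "0 < b" "0 \<le> s" "s \<le> k" "0 < \<kappa>" "\<kappa> * b * s \<le> 1 + k * b - \<kappa>"
  shows "(k - s) * exp (- (b * s)) \<le> k - \<kappa> * s"
proof -
  have e: "1 + b * s \<le> exp (b * s)" by simp
  have p: "0 < 1 + b * s" using assms by (simp add: add_pos_nonneg)
  have "(k - s) * exp (- (b * s)) = (k - s) / exp (b * s)" by (simp add: exp_minus field_simps)
  also have "\<dots> \<le> (k - s) / (1 + b * s)" using assms p e by (intro divide_left_mono) auto
  also have "\<dots> \<le> k - \<kappa> * s"
  proof -
    have "0 \<le> s * (1 + k * b - \<kappa> - \<kappa> * b * s)" using assms by simp
    then have "k - s \<le> (k - \<kappa> * s) * (1 + b * s)" by (simp add: algebra_simps)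
    then show ?thesis using p by (simp add: divide_le_eq)
  qed
  finally show ?thesis .
qed



lemma g1_F2:
  fixes k1 k2 s :: real
  assumes "1 - k1 - a1 * k2 = 0"
  shows "g1 r1 a1 (1 - k1 + s, k2 + s) = (k1 - s) * exp (- (r1 * (a1 - 1) * s))"
proof -
  have "1 - k1 + s - a1 * (k2 + s) = (1 - k1 - a1 * k2) + s * (1 - a1)" by (simp add: algebra_simps)
  also have "\<dots> = s * (1 - a1)" using assms by simp
  finally have E: "1 - k1 + s - a1 * (k2 + s) = s * (1 - a1)" .
  have "r1 * (1 - k1 + s - a1 * (k2 + s)) = r1 * (s * (1 - a1))" by (simp only: E)
  also have "\<dots> = - (r1 * (a1 - 1) * s)" by (simp add: algebra_simps)
  finally have "r1 * (1 - k1 + s - a1 * (k2 + s)) = - (r1 * (a1 - 1) * s)" .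
  then show ?thesis unfolding g1_def by simp
qed

lemma G2_F2:
  fixes k1 k2 s :: real
  assumes "1 - k2 - a2 * k1 = 0"
  shows "G2 r2 a2 (1 - k1 + s, k2 + s) = (k2 + s) * exp (r2 * (a2 - 1) * s)"
proof -
  have "1 - a2 - (k2 + s) + a2 * (1 - k1 + s) = (1 - k2 - a2 * k1) + s * (a2 - 1)" by (simp add: algebra_simps)
  also have "\<dots> = s * (a2 - 1)" using assms by simp
  finally have E: "1 - a2 - (k2 + s) + a2 * (1 - k1 + s) = s * (a2 - 1)" .
  have "r2 * (1 - a2 - (k2 + s) + a2 * (1 - k1 + s)) = r2 * (s * (a2 - 1))" by (simp only: E)
  also have "\<dots> = r2 * (a2 - 1) * s" by (simp add: algebra_simps)
  finally have "r2 * (1 - a2 - (k2 + s) + a2 * (1 - k1 + s)) = r2 * (a2 - 1) * s" .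
  then show ?thesis unfolding G2_def by simp
qed


locale sys =
  fixes r1 r2 a1 a2 :: real and l1 l2 :: "real \<Rightarrow> real"
  assumes r1: "0 < r1" "r1 < 1" and r2: "0 < r2" "r2 < 1" and a1: "1 < a1" and a2: "1 < a2"
    and l1ok: "kernel_ok l1" and l2ok: "kernel_ok l2"
begin

definition k1 :: real where "k1 = (1 - a1) / (1 - a1 * a2)"
definition k2 :: real where "k2 = (1 - a2) / (1 - a1 * a2)"

lemma k_props: "0 < k1" "k1 < 1" "0 < k2" "k2 < 1" "1 - k1 - a1 * k2 = 0" "1 - k2 - a2 * k1 = 0"
proof -
  have p: "1 < a1 * a2" using a1 a2 by (metis less_1_mult)
  then have d: "1 - a1 * a2 < 0" by simp
  have a1a: "a1 < a1 * a2" using a1 a2 by simp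
  have a2a: "a2 < a1 * a2" using a1 a2 by simp
  show "0 < k1" unfolding k1_def using d a1 by (intro divide_neg_neg) auto
  show "0 < k2" unfolding k2_def using d a2 by (intro divide_neg_neg) auto
  show "k1 < 1" unfolding k1_def using d a1a by (simp add: divide_less_eq)
  show "k2 < 1" unfolding k2_def using d a2a by (simp add: divide_less_eq)
  show "1 - k1 - a1 * k2 = 0" unfolding k1_def k2_def using d by (simp add: field_simps)
  show "1 - k2 - a2 * k1 = 0" unfolding k1_def k2_def using d by (simp add: field_simps)
qed

definition good :: "real \<Rightarrow> real \<Rightarrow> real \<Rightarrow> real \<Rightarrow> bool" where
  "good \<kappa> L c \<delta> \<longleftrightarrow> 0 < \<kappa> \<and> 0 < L \<and> 0 < c \<and> 0 < \<delta> \<and> \<delta> \<le> k1 \<and> \<delta> \<le> 1 - k2 \<and> \<delta> \<le> 1 - k1 \<and> \<delta> \<le> k2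
    \<and> (\<forall>s. 0 \<le> s \<and> s \<le> \<delta> \<longrightarrow>
          g1 r1 a1 (1 - k1 + s, k2 + s) \<le> k1 - \<kappa> * s \<and> k2 + \<kappa> * s \<le> G2 r2 a2 (1 - k1 + s, k2 + s)
        \<and> k1 + \<kappa> * s \<le> g1 r1 a1 (1 - k1 - s, k2 - s) \<and> G2 r2 a2 (1 - k1 - s, k2 - s) \<le> k2 - \<kappa> * s)
    \<and> (\<forall>x. eta L (x + c) \<le> \<kappa> * cv l1 (eta L) x) \<and> (\<forall>x. eta L (x + c) \<le> \<kappa> * cv l2 (eta L) x)
    \<and> (\<forall>x. eta L x \<le> \<kappa> * cv l1 (eta L) x) \<and> (\<forall>x. eta L x \<le> \<kappa> * cv l2 (eta L) x)"

lemma good_exists: "\<exists>\<kappa> L c \<delta>. good \<kappa> L c \<delta>"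
proof -
  define b1 where "b1 = r1 * (a1 - 1)"
  define b2 where "b2 = r2 * (a2 - 1)"
  have b: "0 < b1" "0 < b2" unfolding b1_def b2_def using r1 r2 a1 a2 by auto
  have kb: "0 < k1 * b1" "0 < k2 * b2" using b k_props by auto
  define \<kappa> where "\<kappa> = 1 + min (k1 * b1) (k2 * b2) / 2"
  have \<kappa>: "1 < \<kappa>" "\<kappa> \<le> 1 + k1 * b1" "\<kappa> \<le> 1 + k2 * b2" "0 < 1 + k1 * b1 - \<kappa>" "0 < 1 + k2 * b2 - \<kappa>"
    unfolding \<kappa>_def using kb by (auto simp: min_def mult.commute)
  obtain L where L: "L > 0" "1 < \<kappa> * mK l1 L" "1 < \<kappa> * mK l2 L" "0 < sK l1 L" "0 < sK l2 L"
    using choose_L[OF l1ok l2ok \<kappa>(1)] by blast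
  obtain c1 where c1: "c1 > 0" "\<forall>c x. 0 \<le> c \<and> c \<le> c1 \<longrightarrow> eta L (x + c) \<le> \<kappa> * cv l1 (eta L) x"
    using kernel_est[OF l1ok L(1) _ L(2) L(4)] \<kappa> by auto
  obtain c2 where c2: "c2 > 0" "\<forall>c x. 0 \<le> c \<and> c \<le> c2 \<longrightarrow> eta L (x + c) \<le> \<kappa> * cv l2 (eta L) x"
    using kernel_est[OF l2ok L(1) _ L(3) L(5)] \<kappa> by auto
  define c where "c = min c1 c2"
  define \<delta> where "\<delta> = min (min (min k1 (1 - k2)) (min (1 - k1) k2))
      (min ((1 + k1 * b1 - \<kappa>) / (\<kappa> * b1)) ((1 + k2 * b2 - \<kappa>) / (\<kappa> * b2)))"
  have \<delta>0: "0 < \<delta>" unfolding \<delta>_def using k_props \<kappa> b by auto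
  have \<delta>1: "\<delta> \<le> k1" "\<delta> \<le> 1 - k2" "\<delta> \<le> 1 - k1" "\<delta> \<le> k2"
    "\<delta> \<le> (1 + k1 * b1 - \<kappa>) / (\<kappa> * b1)" "\<delta> \<le> (1 + k2 * b2 - \<kappa>) / (\<kappa> * b2)"
    unfolding \<delta>_def by auto
  have nl: "g1 r1 a1 (1 - k1 + s, k2 + s) \<le> k1 - \<kappa> * s \<and> k2 + \<kappa> * s \<le> G2 r2 a2 (1 - k1 + s, k2 + s)
        \<and> k1 + \<kappa> * s \<le> g1 r1 a1 (1 - k1 - s, k2 - s) \<and> G2 r2 a2 (1 - k1 - s, k2 - s) \<le> k2 - \<kappa> * s"
    if s: "0 \<le> s" "s \<le> \<delta>" for s
  proof (intro conjI)
    have sb1: "\<kappa> * b1 * s \<le> 1 + k1 * b1 - \<kappa>"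
    proof -
      have "s \<le> (1 + k1 * b1 - \<kappa>) / (\<kappa> * b1)" using s \<delta>1 by linarith
      then have "s * (\<kappa> * b1) \<le> 1 + k1 * b1 - \<kappa>" using b \<kappa> by (simp add: le_divide_eq)
      then show ?thesis by (simp add: algebra_simps)
    qed
    have sb2: "\<kappa> * b2 * s \<le> 1 + k2 * b2 - \<kappa>"
    proof -
      have "s \<le> (1 + k2 * b2 - \<kappa>) / (\<kappa> * b2)" using s \<delta>1 by linarith
      then have "s * (\<kappa> * b2) \<le> 1 + k2 * b2 - \<kappa>" using b \<kappa> by (simp add: le_divide_eq)
      then show ?thesis by (simp add: algebra_simps)
    qed
    have "g1 r1 a1 (1 - k1 + s, k2 + s) = (k1 - s) * exp (- (b1 * s))"
      using g1_F2[OF k_props(5)] unfolding b1_def by simp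
    also have "\<dots> \<le> k1 - \<kappa> * s" using down_est[OF b(1) s(1) _ _ sb1] s \<delta>1 \<kappa> by linarith
    finally show "g1 r1 a1 (1 - k1 + s, k2 + s) \<le> k1 - \<kappa> * s" .
    have "k2 + \<kappa> * s \<le> (k2 + s) * exp (b2 * s)" using up_est[OF _ _ s(1) \<kappa>(3)] k_props b by linarith
    also have "\<dots> = G2 r2 a2 (1 - k1 + s, k2 + s)"
      using G2_F2[OF k_props(6)] unfolding b2_def by (simp add: mult.assoc)
    finally show "k2 + \<kappa> * s \<le> G2 r2 a2 (1 - k1 + s, k2 + s)" .
    have "k1 + \<kappa> * s \<le> (k1 + s) * exp (b1 * s)" using up_est[OF _ _ s(1) \<kappa>(2)] k_props b by linarith
    also have "\<dots> = g1 r1 a1 (1 - k1 + (- s), k2 + (- s))"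
      using g1_F2[OF k_props(5), of r1 "-s"] unfolding b1_def by (simp add: mult.assoc)
    finally show "k1 + \<kappa> * s \<le> g1 r1 a1 (1 - k1 - s, k2 - s)" by simp
    have "G2 r2 a2 (1 - k1 + (- s), k2 + (- s)) = (k2 - s) * exp (- (b2 * s))"
      using G2_F2[OF k_props(6), of r2 "-s"] unfolding b2_def by (simp add: mult.assoc)
    also have "\<dots> \<le> k2 - \<kappa> * s" using down_est[OF b(2) s(1) _ _ sb2] s \<delta>1 \<kappa> by linarith
    finally show "G2 r2 a2 (1 - k1 - s, k2 - s) \<le> k2 - \<kappa> * s" by simp
  qed
  have "good \<kappa> L c \<delta>"
    unfolding good_def
    using \<kappa> L(1) c1 c2 \<delta>0 \<delta>1 nl
    apply (intro conjI allI impI)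
    apply (simp_all add: c_def)
    using c1(2)[rule_format, of 0] c2(2)[rule_format, of 0] by auto
  then show ?thesis by blast
qed

end



lemma cv_shift: "cv l (\<lambda>y. eta L (y + \<sigma>)) t = cv l (eta L) (t + \<sigma>)"
proof -
  have "(\<lambda>y. eta L (t - y + \<sigma>) * l y) = (\<lambda>y. eta L (t + \<sigma> - y) * l y)"
    by (simp add: algebra_simps)
  then show ?thesis by (simp add: cv_swap)
qed

lemma cont_etash: "L > 0 \<Longrightarrow> continuous_on UNIV (\<lambda>y. eta L (y + \<sigma>))"
  by (intro continuous_on_compose2[OF eta_cont] continuous_intros) auto

lemma cont_g1: "continuous_on UNIV U \<Longrightarrow> continuous_on UNIV (\<lambda>y. g1 r1 a1 (U y))"
  unfolding g1_def by (intro continuous_intros)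

lemma cont_G2: "continuous_on UNIV U \<Longrightarrow> continuous_on UNIV (\<lambda>y. G2 r2 a2 (U y))"
  unfolding G2_def by (intro continuous_intros)

context sys
begin

context
  fixes \<kappa> L c \<delta> :: real
  assumes G: "good \<kappa> L c \<delta>"
begin

lemma G_facts: "0 < \<kappa>" "0 < L" "0 < c" "0 < \<delta>" "\<delta> \<le> k1" "\<delta> \<le> 1 - k2" "\<delta> \<le> 1 - k1" "\<delta> \<le> k2"
  "\<And>x. eta L (x + c) \<le> \<kappa> * cv l1 (eta L) x" "\<And>x. eta L (x + c) \<le> \<kappa> * cv l2 (eta L) x"
  "\<And>x. eta L x \<le> \<kappa> * cv l1 (eta L) x" "\<And>x. eta L x \<le> \<kappa> * cv l2 (eta L) x"
  using G unfolding good_def by auto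

lemma G_nl:
  assumes "0 \<le> s" "s \<le> \<delta>"
  shows "g1 r1 a1 (1 - k1 + s, k2 + s) \<le> k1 - \<kappa> * s" "k2 + \<kappa> * s \<le> G2 r2 a2 (1 - k1 + s, k2 + s)"
        "k1 + \<kappa> * s \<le> g1 r1 a1 (1 - k1 - s, k2 - s)" "G2 r2 a2 (1 - k1 - s, k2 - s) \<le> k2 - \<kappa> * s"
  using G assms unfolding good_def by auto

lemma s_range: "0 \<le> \<delta> * eta L y" "\<delta> * eta L y \<le> \<delta>"
  using eta_bounds[OF G_facts(2), of y] G_facts(4) by (auto simp: mult_left_le)

definition W :: "real \<Rightarrow> real \<Rightarrow> state" where
  "W \<sigma> y = (1 - k1 + \<delta> * eta L (y + \<sigma>), k2 + \<delta> * eta L (y + \<sigma>))"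

definition V :: "real \<Rightarrow> state" where
  "V y = (1 - k1 - \<delta> * eta L y, k2 - \<delta> * eta L y)"

definition invL :: "sfun \<Rightarrow> real \<Rightarrow> bool" where
  "invL U \<sigma> \<longleftrightarrow> continuous_on UNIV U \<and> (\<forall>y. leq2 (W \<sigma> y) (U y) \<and> leq2 (U y) (1, 1))"

definition invR :: "sfun \<Rightarrow> bool" where
  "invR U \<longleftrightarrow> continuous_on UNIV U \<and> (\<forall>y. leq2 (0, 0) (U y) \<and> leq2 (U y) (V y))"


lemma stepL:
  assumes inv: "invL U \<sigma>"
  shows "invL (Qop r1 r2 a1 a2 l1 l2 U) (\<sigma> + c)"
proof -
  have Uc: "continuous_on UNIV U" using inv unfolding invL_def by simp
  have lo1: "1 - k1 + \<delta> * eta L (y + \<sigma>) \<le> fst (U y)" for y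
    using inv unfolding invL_def W_def leq2_def by auto
  have lo2: "k2 + \<delta> * eta L (y + \<sigma>) \<le> snd (U y)" for y
    using inv unfolding invL_def W_def leq2_def by auto
  have up1: "fst (U y) \<le> 1" for y using inv unfolding invL_def leq2_def by auto
  have up2: "snd (U y) \<le> 1" for y using inv unfolding invL_def leq2_def by auto
  have kp: "0 < k1" "k1 < 1" "0 < k2" "k2 < 1" using k_props by auto
  note sr = s_range
  have m1: "g1 r1 a1 (U y) \<le> k1 + (- (\<kappa> * \<delta>)) * eta L (y + \<sigma>)" for y
  proof -
    have "g1 r1 a1 (U y) \<le> g1 r1 a1 (1 - k1 + \<delta> * eta L (y + \<sigma>), k2 + \<delta> * eta L (y + \<sigma>))"
      using lo1[of y] lo2[of y] up1[of y] kp sr[of "y + \<sigma>"] r1 a1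
      by (intro g1_mono) auto
    also have "\<dots> \<le> k1 - \<kappa> * (\<delta> * eta L (y + \<sigma>))" by (rule G_nl(1)[OF sr])
    finally show ?thesis by (simp add: algebra_simps)
  qed
  have m2: "k2 + (\<kappa> * \<delta>) * eta L (y + \<sigma>) \<le> G2 r2 a2 (U y)" for y
  proof -
    have "k2 + \<kappa> * (\<delta> * eta L (y + \<sigma>)) \<le> G2 r2 a2 (1 - k1 + \<delta> * eta L (y + \<sigma>), k2 + \<delta> * eta L (y + \<sigma>))"
      by (rule G_nl(2)[OF sr])
    also have "\<dots> \<le> G2 r2 a2 (U y)"
      using lo1[of y] lo2[of y] up2[of y] kp sr[of "y + \<sigma>"] r2 a2 G_facts(6)
      by (intro G2_mono) auto
    finally show ?thesis by (simp add: algebra_simps)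
  qed
  have gb: "\<bar>g1 r1 a1 (U y)\<bar> \<le> 1" for y
  proof -
    have "0 \<le> g1 r1 a1 (U y)" unfolding g1_def using up1[of y] by simp
    moreover have "g1 r1 a1 (U y) \<le> 1"
    proof -
      have "0 \<le> (\<kappa> * \<delta>) * eta L (y + \<sigma>)"
        using G_facts(1,4) eta_bounds[OF G_facts(2), of "y + \<sigma>"] by simp
      then show ?thesis using m1[of y] kp by simp
    qed
    ultimately show ?thesis by simp
  qed
  have Gb: "\<bar>G2 r2 a2 (U y)\<bar> \<le> 1" for y
  proof -
    have "0 \<le> snd (U y)" using lo2[of y] kp sr[of "y + \<sigma>"] by linarith
    then have "0 \<le> G2 r2 a2 (U y)" unfolding G2_def by simp
    moreover have "G2 r2 a2 (U y) \<le> G2 r2 a2 (1, 1)"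
      using up1[of y] up2[of y] \<open>0 \<le> snd (U y)\<close> r2 a2 by (intro G2_mono) auto
    moreover have "G2 r2 a2 (1, 1) = 1" unfolding G2_def by simp
    ultimately show ?thesis by simp
  qed
  have ec: "continuous_on UNIV (\<lambda>y. eta L (y + \<sigma>))" by (rule cont_etash[OF G_facts(2)])
  have eb: "\<bar>eta L (y + \<sigma>)\<bar> \<le> 1" for y by (rule eta_abs)
  have lc1: "continuous_on UNIV (\<lambda>y. k1 + (- (\<kappa> * \<delta>)) * eta L (y + \<sigma>))" using ec by (intro continuous_intros)
  have lc2: "continuous_on UNIV (\<lambda>y. k2 + (\<kappa> * \<delta>) * eta L (y + \<sigma>))" using ec by (intro continuous_intros)
  have lb1: "\<bar>k1 + (- (\<kappa> * \<delta>)) * eta L (y + \<sigma>)\<bar> \<le> \<bar>k1\<bar> + \<bar>\<kappa> * \<delta>\<bar>" for y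
  proof -
    have "\<bar>(- (\<kappa> * \<delta>)) * eta L (y + \<sigma>)\<bar> = \<bar>\<kappa> * \<delta>\<bar> * \<bar>eta L (y + \<sigma>)\<bar>" by (simp add: abs_mult)
    also have "\<dots> \<le> \<bar>\<kappa> * \<delta>\<bar>" using eb[of y] by (intro mult_left_le) auto
    finally show ?thesis using abs_triangle_ineq[of "k1" "(- (\<kappa> * \<delta>)) * eta L (y + \<sigma>)"] by linarith
  qed
  have lb2: "\<bar>k2 + (\<kappa> * \<delta>) * eta L (y + \<sigma>)\<bar> \<le> \<bar>k2\<bar> + \<bar>\<kappa> * \<delta>\<bar>" for y
  proof -
    have "\<bar>(\<kappa> * \<delta>) * eta L (y + \<sigma>)\<bar> = \<bar>\<kappa> * \<delta>\<bar> * \<bar>eta L (y + \<sigma>)\<bar>" by (simp add: abs_mult)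
    also have "\<dots> \<le> \<bar>\<kappa> * \<delta>\<bar>" using eb[of y] by (intro mult_left_le) auto
    finally show ?thesis using abs_triangle_ineq[of "k2" "(\<kappa> * \<delta>) * eta L (y + \<sigma>)"] by linarith
  qed
  define QU where "QU = Qop r1 r2 a1 a2 l1 l2 U"
  have QU: "QU t = (1 - cv l1 (\<lambda>y. g1 r1 a1 (U y)) t, cv l2 (\<lambda>y. G2 r2 a2 (U y)) t)" for t
    unfolding QU_def Qop_eq by simp
  have c1: "cv l1 (\<lambda>y. g1 r1 a1 (U y)) t \<le> k1 - \<delta> * eta L (t + (\<sigma> + c))" for t
  proof -
    have "cv l1 (\<lambda>y. g1 r1 a1 (U y)) t \<le> cv l1 (\<lambda>y. k1 + (- (\<kappa> * \<delta>)) * eta L (y + \<sigma>)) t"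
      by (rule cv_mono[OF l1ok cont_g1[OF Uc] gb lc1 lb1 m1])
    also have "\<dots> = k1 + (- (\<kappa> * \<delta>)) * cv l1 (\<lambda>y. eta L (y + \<sigma>)) t"
      by (rule cv_lin[OF l1ok ec eb])
    also have "\<dots> = k1 - \<delta> * (\<kappa> * cv l1 (eta L) (t + \<sigma>))" by (simp add: cv_shift algebra_simps)
    also have "\<dots> \<le> k1 - \<delta> * eta L (t + \<sigma> + c)"
      using G_facts(9)[of "t + \<sigma>"] G_facts(4) by (simp add: mult_left_mono)
    finally show ?thesis by (simp add: add.assoc)
  qed
  have c2: "k2 + \<delta> * eta L (t + (\<sigma> + c)) \<le> cv l2 (\<lambda>y. G2 r2 a2 (U y)) t" for t
  proof -
    have "k2 + \<delta> * eta L (t + \<sigma> + c) \<le> k2 + \<delta> * (\<kappa> * cv l2 (eta L) (t + \<sigma>))"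
      using G_facts(10)[of "t + \<sigma>"] G_facts(4) by (simp add: mult_left_mono)
    also have "\<dots> = k2 + (\<kappa> * \<delta>) * cv l2 (\<lambda>y. eta L (y + \<sigma>)) t" by (simp add: cv_shift algebra_simps)
    also have "\<dots> = cv l2 (\<lambda>y. k2 + (\<kappa> * \<delta>) * eta L (y + \<sigma>)) t"
      by (rule cv_lin[OF l2ok ec eb, symmetric])
    also have "\<dots> \<le> cv l2 (\<lambda>y. G2 r2 a2 (U y)) t"
      by (rule cv_mono[OF l2ok lc2 lb2 cont_G2[OF Uc] Gb m2])
    finally show ?thesis by (simp add: add.assoc)
  qed
  have u1: "0 \<le> cv l1 (\<lambda>y. g1 r1 a1 (U y)) t" for t
    using up1 by (intro cv_nonneg[OF l1ok]) (simp add: g1_def)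
  have u2: "cv l2 (\<lambda>y. G2 r2 a2 (U y)) t \<le> 1" for t
  proof -
    have "cv l2 (\<lambda>y. G2 r2 a2 (U y)) t \<le> cv l2 (\<lambda>_. 1) t"
    proof (rule cv_mono[OF l2ok cont_G2[OF Uc] Gb, of _ 1])
      show "G2 r2 a2 (U y) \<le> 1" for y using Gb[of y] by linarith
    qed auto
    then show ?thesis using cv_one[OF l2ok] by simp
  qed
  have cont: "continuous_on UNIV QU"
  proof -
    have "continuous_on UNIV (\<lambda>t. (1 - cv l1 (\<lambda>y. g1 r1 a1 (U y)) t, cv l2 (\<lambda>y. G2 r2 a2 (U y)) t))"
      using cv_cont[OF l1ok cont_g1[OF Uc] gb] cv_cont[OF l2ok cont_G2[OF Uc] Gb]
      by (intro continuous_intros) auto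
    moreover have "QU = (\<lambda>t. (1 - cv l1 (\<lambda>y. g1 r1 a1 (U y)) t, cv l2 (\<lambda>y. G2 r2 a2 (U y)) t))"
      using QU by auto
    ultimately show ?thesis by simp
  qed
  have "\<forall>y. leq2 (W (\<sigma> + c) y) (QU y) \<and> leq2 (QU y) (1, 1)"
  proof
    fix y
    show "leq2 (W (\<sigma> + c) y) (QU y) \<and> leq2 (QU y) (1, 1)"
      unfolding W_def leq2_def QU using c1[of y] c2[of y] u1[of y] u2[of y] by simp
  qed
  then show ?thesis unfolding QU_def[symmetric] invL_def using cont by simp
qed


lemma stepR:
  assumes inv: "invR U"
  shows "invR (Qop r1 r2 a1 a2 l1 l2 U)"
proof -
  have Uc: "continuous_on UNIV U" using inv unfolding invR_def by simp
  have lo1: "0 \<le> fst (U y)" for y using inv unfolding invR_def leq2_def by auto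
  have lo2: "0 \<le> snd (U y)" for y using inv unfolding invR_def leq2_def by auto
  have up1: "fst (U y) \<le> 1 - k1 - \<delta> * eta L y" for y
    using inv unfolding invR_def V_def leq2_def by auto
  have up2: "snd (U y) \<le> k2 - \<delta> * eta L y" for y
    using inv unfolding invR_def V_def leq2_def by auto
  have kp: "0 < k1" "k1 < 1" "0 < k2" "k2 < 1" using k_props by auto
  note sr = s_range
  have m1: "k1 + (\<kappa> * \<delta>) * eta L y \<le> g1 r1 a1 (U y)" for y
  proof -
    have "k1 + \<kappa> * (\<delta> * eta L y) \<le> g1 r1 a1 (1 - k1 - \<delta> * eta L y, k2 - \<delta> * eta L y)"
      by (rule G_nl(3)[OF sr])
    also have "\<dots> \<le> g1 r1 a1 (U y)"
      using lo1[of y] up1[of y] up2[of y] kp sr[of y] r1 a1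
      by (intro g1_mono) auto
    finally show ?thesis by (simp add: algebra_simps)
  qed
  have m2: "G2 r2 a2 (U y) \<le> k2 + (- (\<kappa> * \<delta>)) * eta L y" for y
  proof -
    have "G2 r2 a2 (U y) \<le> G2 r2 a2 (1 - k1 - \<delta> * eta L y, k2 - \<delta> * eta L y)"
      using lo2[of y] up1[of y] up2[of y] kp sr[of y] r2 a2
      by (intro G2_mono) auto
    also have "\<dots> \<le> k2 - \<kappa> * (\<delta> * eta L y)" by (rule G_nl(4)[OF sr])
    finally show ?thesis by (simp add: algebra_simps)
  qed
  have g1le: "g1 r1 a1 (U y) \<le> 1" for y
  proof -
    have "g1 r1 a1 (U y) \<le> g1 r1 a1 (0, 0)"
      using lo1[of y] lo2[of y] up1[of y] kp sr[of y] r1 a1 by (intro g1_mono) auto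
    then show ?thesis unfolding g1_def by simp
  qed
  have gb: "\<bar>g1 r1 a1 (U y)\<bar> \<le> 1" for y
  proof -
    have "fst (U y) \<le> 1" using up1[of y] kp sr[of y] by linarith
    then have "0 \<le> g1 r1 a1 (U y)" unfolding g1_def by simp
    then show ?thesis using g1le[of y] by simp
  qed
  have Gb: "\<bar>G2 r2 a2 (U y)\<bar> \<le> 1" for y
  proof -
    have "0 \<le> G2 r2 a2 (U y)" unfolding G2_def using lo2[of y] by simp
    moreover have "0 \<le> (\<kappa> * \<delta>) * eta L y"
      using G_facts(1,4) eta_bounds[OF G_facts(2), of y] by simp
    ultimately show ?thesis using m2[of y] kp by simp
  qed
  have ec: "continuous_on UNIV (eta L)" by (rule eta_cont[OF G_facts(2)])
  have eb: "\<bar>eta L y\<bar> \<le> 1" for y by (rule eta_abs)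
  have lc1: "continuous_on UNIV (\<lambda>y. k1 + (\<kappa> * \<delta>) * eta L y)" using ec by (intro continuous_intros)
  have lc2: "continuous_on UNIV (\<lambda>y. k2 + (- (\<kappa> * \<delta>)) * eta L y)" using ec by (intro continuous_intros)
  have lb: "\<bar>k + a * eta L y\<bar> \<le> \<bar>k\<bar> + \<bar>a\<bar>" for k a y
  proof -
    have "\<bar>a * eta L y\<bar> = \<bar>a\<bar> * \<bar>eta L y\<bar>" by (simp add: abs_mult)
    also have "\<dots> \<le> \<bar>a\<bar>" using eb[of y] by (intro mult_left_le) auto
    finally show ?thesis using abs_triangle_ineq[of k "a * eta L y"] by linarith
  qed
  define QU where "QU = Qop r1 r2 a1 a2 l1 l2 U"
  have QU: "QU t = (1 - cv l1 (\<lambda>y. g1 r1 a1 (U y)) t, cv l2 (\<lambda>y. G2 r2 a2 (U y)) t)" for t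
    unfolding QU_def Qop_eq by simp
  have c1: "k1 + \<delta> * eta L t \<le> cv l1 (\<lambda>y. g1 r1 a1 (U y)) t" for t
  proof -
    have "k1 + \<delta> * eta L t \<le> k1 + \<delta> * (\<kappa> * cv l1 (eta L) t)"
      using G_facts(11)[of t] G_facts(4) by (simp add: mult_left_mono)
    also have "\<dots> = k1 + (\<kappa> * \<delta>) * cv l1 (eta L) t" by (simp add: algebra_simps)
    also have "\<dots> = cv l1 (\<lambda>y. k1 + (\<kappa> * \<delta>) * eta L y) t"
      by (rule cv_lin[OF l1ok ec eb, symmetric])
    also have "\<dots> \<le> cv l1 (\<lambda>y. g1 r1 a1 (U y)) t"
      by (rule cv_mono[OF l1ok lc1 lb cont_g1[OF Uc] gb m1])
    finally show ?thesis .
  qed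
  have c2: "cv l2 (\<lambda>y. G2 r2 a2 (U y)) t \<le> k2 - \<delta> * eta L t" for t
  proof -
    have "cv l2 (\<lambda>y. G2 r2 a2 (U y)) t \<le> cv l2 (\<lambda>y. k2 + (- (\<kappa> * \<delta>)) * eta L y) t"
      by (rule cv_mono[OF l2ok cont_G2[OF Uc] Gb lc2 lb m2])
    also have "\<dots> = k2 + (- (\<kappa> * \<delta>)) * cv l2 (eta L) t"
      by (rule cv_lin[OF l2ok ec eb])
    also have "\<dots> = k2 - \<delta> * (\<kappa> * cv l2 (eta L) t)" by (simp add: algebra_simps)
    also have "\<dots> \<le> k2 - \<delta> * eta L t"
      using G_facts(12)[of t] G_facts(4) by (simp add: mult_left_mono)
    finally show ?thesis .
  qed
  have u1: "cv l1 (\<lambda>y. g1 r1 a1 (U y)) t \<le> 1" for t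
  proof -
    have "cv l1 (\<lambda>y. g1 r1 a1 (U y)) t \<le> cv l1 (\<lambda>_. 1) t"
    proof (rule cv_mono[OF l1ok cont_g1[OF Uc] gb, of _ 1])
      show "g1 r1 a1 (U y) \<le> 1" for y by (rule g1le)
    qed auto
    then show ?thesis using cv_one[OF l1ok] by simp
  qed
  have u2: "0 \<le> cv l2 (\<lambda>y. G2 r2 a2 (U y)) t" for t
    using lo2 by (intro cv_nonneg[OF l2ok]) (simp add: G2_def)
  have cont: "continuous_on UNIV QU"
  proof -
    have "continuous_on UNIV (\<lambda>t. (1 - cv l1 (\<lambda>y. g1 r1 a1 (U y)) t, cv l2 (\<lambda>y. G2 r2 a2 (U y)) t))"
      using cv_cont[OF l1ok cont_g1[OF Uc] gb] cv_cont[OF l2ok cont_G2[OF Uc] Gb]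
      by (intro continuous_intros) auto
    moreover have "QU = (\<lambda>t. (1 - cv l1 (\<lambda>y. g1 r1 a1 (U y)) t, cv l2 (\<lambda>y. G2 r2 a2 (U y)) t))"
      using QU by auto
    ultimately show ?thesis by simp
  qed
  have "\<forall>y. leq2 (0, 0) (QU y) \<and> leq2 (QU y) (V y)"
  proof
    fix y
    show "leq2 (0, 0) (QU y) \<and> leq2 (QU y) (V y)"
      unfolding V_def leq2_def QU using c1[of y] c2[of y] u1[of y] u2[of y] by simp
  qed
  then show ?thesis unfolding QU_def[symmetric] invR_def using cont by simp
qed

lemma iterL: "invL ((Qop r1 r2 a1 a2 l1 l2 ^^ n) (W 0)) (real n * c)"
proof (induction n)
  case 0
  have "continuous_on UNIV (W 0)"
    unfolding W_def using eta_cont[OF G_facts(2)] by (intro continuous_intros) auto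
  moreover have "leq2 (W 0 y) (1, 1)" for y
    using s_range[of y] G_facts(5,6) unfolding W_def leq2_def by auto
  ultimately show ?case unfolding invL_def leq2_def by simp
next
  case (Suc n)
  then show ?case using stepL[OF Suc] by (simp add: algebra_simps)
qed

lemma iterR: "invR ((Qop r1 r2 a1 a2 l1 l2 ^^ n) V)"
proof (induction n)
  case 0
  have "continuous_on UNIV V"
    unfolding V_def using eta_cont[OF G_facts(2)] by (intro continuous_intros) auto
  moreover have "leq2 (0, 0) (V y)" for y
    using s_range[of y] G_facts(7,8) unfolding V_def leq2_def by auto
  ultimately show ?case unfolding invR_def leq2_def by simp
next
  case (Suc n)
  then show ?case using stepR[OF Suc] by simp
qed

end
end


lemma pair_eta_ucont:
  assumes "L > 0"
  shows "uniformly_continuous_on UNIV (\<lambda>y. (A + d * eta L y, B + d * eta L y))"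
  unfolding uniformly_continuous_on_def
proof (intro allI impI)
  fix e :: real assume e: "e > 0"
  define K where "K = 2 * (\<bar>d\<bar> + 1) * pi / L"
  have K: "K > 0" unfolding K_def using assms by (simp add: add_pos_nonneg)
  show "\<exists>d'>0. \<forall>x\<in>UNIV. \<forall>x'\<in>UNIV. dist x' x < d' \<longrightarrow>
        dist (A + d * eta L x', B + d * eta L x') (A + d * eta L x, B + d * eta L x) < e"
  proof (intro exI[of _ "e / K"] conjI ballI impI)
    show "e / K > 0" using e K by simp
    fix x x' :: real assume dx: "dist x' x < e / K"
    have "dist (A + d * eta L x', B + d * eta L x') (A + d * eta L x, B + d * eta L x)
        = norm (d * (eta L x' - eta L x), d * (eta L x' - eta L x))"
      by (simp add: dist_norm algebra_simps)
    also have "\<dots> \<le> norm (d * (eta L x' - eta L x)) + norm (d * (eta L x' - eta L x))"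
      by (rule norm_Pair_le)
    also have "\<dots> = 2 * (\<bar>d\<bar> * \<bar>eta L x' - eta L x\<bar>)" by (simp add: abs_mult)
    also have "\<dots> \<le> 2 * ((\<bar>d\<bar> + 1) * (pi / L * \<bar>x' - x\<bar>))"
      using eta_lip[OF assms, of x' x] by (intro mult_left_mono mult_mono) auto
    also have "\<dots> = K * dist x' x" unfolding K_def dist_real_def by simp
    also have "\<dots> < K * (e / K)" using dx K by (intro mult_strict_left_mono) auto
    also have "\<dots> = e" using K by simp
    finally show "dist (A + d * eta L x', B + d * eta L x') (A + d * eta L x, B + d * eta L x) < e" .
  qed
qed

lemma pair_eta_bounded:
  assumes "L > 0"
  shows "bounded (range (\<lambda>y. (A + d * eta L y, B + d * eta L y)))"
  unfolding bounded_iff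
proof (intro exI[of _ "\<bar>A\<bar> + \<bar>B\<bar> + 2 * \<bar>d\<bar>"] ballI)
  fix p assume "p \<in> range (\<lambda>y. (A + d * eta L y, B + d * eta L y))"
  then obtain y where p: "p = (A + d * eta L y, B + d * eta L y)" by auto
  have e: "\<bar>d * eta L y\<bar> \<le> \<bar>d\<bar>" using eta_abs[of L y] by (simp add: abs_mult mult_left_le)
  have "norm p \<le> norm (A + d * eta L y) + norm (B + d * eta L y)" unfolding p by (rule norm_Pair_le)
  also have "\<dots> \<le> \<bar>A\<bar> + \<bar>B\<bar> + 2 * \<bar>d\<bar>" using e by (simp add: abs_triangle_ineq order_trans)
  finally show "norm p \<le> \<bar>A\<bar> + \<bar>B\<bar> + 2 * \<bar>d\<bar>" .
qed


context sys
begin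

context
  fixes \<kappa> L c \<delta> :: real
  assumes G: "good \<kappa> L c \<delta>"
begin

lemma W0_eq: "W L \<delta> 0 = (\<lambda>y. (1 - k1 + \<delta> * eta L y, k2 + \<delta> * eta L y))"
  unfolding W_def[OF G] by simp

lemma V_eq: "V L \<delta> = (\<lambda>y. (1 - k1 + (- \<delta>) * eta L y, k2 + (- \<delta>) * eta L y))"
  unfolding V_def[OF G] by (simp add: fun_eq_iff)

lemma W0_in: "W L \<delta> 0 \<in> Cint (1 - k1, k2) (1, 1)"
proof -
  have "W L \<delta> 0 \<in> UCB" unfolding UCB_def W0_eq
    using pair_eta_ucont[OF G_facts(2)[OF G]] pair_eta_bounded[OF G_facts(2)[OF G]] by simp
  moreover have "leq2 (1 - k1, k2) (W L \<delta> 0 x) \<and> leq2 (W L \<delta> 0 x) (1, 1)" for x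
    using s_range[OF G, of x] G_facts(5,6)[OF G] unfolding W0_eq leq2_def by auto
  ultimately show ?thesis unfolding Cint_def by auto
qed

lemma V_in: "V L \<delta> \<in> Cint (0, 0) (1 - k1, k2)"
proof -
  have "V L \<delta> \<in> UCB" unfolding UCB_def V_eq mem_Collect_eq
    by (intro conjI pair_eta_ucont[OF G_facts(2)[OF G]] pair_eta_bounded[OF G_facts(2)[OF G]])
  moreover have "leq2 (0, 0) (V L \<delta> x) \<and> leq2 (V L \<delta> x) (1 - k1, k2)" for x
    using s_range[OF G, of x] G_facts(7,8)[OF G] unfolding V_def[OF G] leq2_def by auto
  ultimately show ?thesis unfolding Cint_def by auto
qed

lemma W0_supp: "\<exists>R. \<forall>x. \<bar>x\<bar> > R \<longrightarrow> W L \<delta> 0 x = (1 - k1, k2)"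
  using eta_out[OF G_facts(2)[OF G]] unfolding W0_eq by (intro exI[of _ "L/2"]) auto

lemma V_supp: "\<exists>R. \<forall>x. \<bar>x\<bar> > R \<longrightarrow> V L \<delta> x = (1 - k1, k2)"
  using eta_out[OF G_facts(2)[OF G]] unfolding V_def[OF G] by (intro exI[of _ "L/2"]) auto

lemma cm_bound:
  assumes LS: "left_speed (Qop r1 r2 a1 a2 l1 l2) (1 - k1, k2) (1, 1) cm"
  shows "c \<le> cm"
proof (rule ccontr)
  assume "\<not> c \<le> cm"
  then have lt: "cm < c" by simp
  define c' where "c' = (cm + c) / 2"
  have c': "cm < c'" "c' < c" using lt unfolding c'_def by auto
  have d2: "\<delta> / 2 > 0" using G_facts(4)[OF G] by simp
  have "eventually (\<lambda>n. \<forall>x. x \<le> - c' * real n \<longrightarrow>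
      dist ((Qop r1 r2 a1 a2 l1 l2 ^^ n) (W L \<delta> 0) x) (1 - k1, k2) \<le> \<delta> / 2) sequentially"
    using LS W0_in W0_supp c'(1) d2 unfolding left_speed_def by blast
  then obtain N where N: "\<forall>n\<ge>N. \<forall>x. x \<le> - c' * real n \<longrightarrow>
      dist ((Qop r1 r2 a1 a2 l1 l2 ^^ n) (W L \<delta> 0) x) (1 - k1, k2) \<le> \<delta> / 2"
    unfolding eventually_sequentially by blast
  define U where "U = (Qop r1 r2 a1 a2 l1 l2 ^^ N) (W L \<delta> 0)"
  define x where "x = - c * real N"
  have "x \<le> - c' * real N" unfolding x_def using c' by (simp add: mult_right_mono)
  then have dU: "dist (U x) (1 - k1, k2) \<le> \<delta> / 2" using N unfolding U_def by blast
  have "invL L \<delta> U (real N * c)" unfolding U_def by (rule iterL[OF G])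
  then have "leq2 (W L \<delta> (real N * c) x) (U x)" unfolding invL_def[OF G] by blast
  moreover have "W L \<delta> (real N * c) x = (1 - k1 + \<delta>, k2 + \<delta>)"
    unfolding W_def[OF G] x_def using eta_zero[OF G_facts(2)[OF G]] by simp
  ultimately have "1 - k1 + \<delta> \<le> fst (U x)" unfolding leq2_def by simp
  then have "\<delta> \<le> dist (fst (U x)) (fst (1 - k1, k2))" by (simp add: dist_real_def)
  also have "\<dots> \<le> dist (U x) (1 - k1, k2)" by (rule dist_fst_le)
  finally show False using dU d2 by simp
qed

lemma cp_bound:
  assumes RS: "right_speed (Qop r1 r2 a1 a2 l1 l2) (0, 0) (1 - k1, k2) cp"
  shows "0 \<le> cp"
proof (rule ccontr)
  assume "\<not> 0 \<le> cp"
  then have lt: "cp < 0" by simp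
  define c' where "c' = cp / 2"
  have c': "cp < c'" "c' < 0" using lt unfolding c'_def by auto
  have d2: "\<delta> / 2 > 0" using G_facts(4)[OF G] by simp
  have "eventually (\<lambda>n. \<forall>x. c' * real n \<le> x \<longrightarrow>
      dist ((Qop r1 r2 a1 a2 l1 l2 ^^ n) (V L \<delta>) x) (1 - k1, k2) \<le> \<delta> / 2) sequentially"
    using RS V_in V_supp c'(1) d2 unfolding right_speed_def by blast
  then obtain N where N: "\<forall>n\<ge>N. \<forall>x. c' * real n \<le> x \<longrightarrow>
      dist ((Qop r1 r2 a1 a2 l1 l2 ^^ n) (V L \<delta>) x) (1 - k1, k2) \<le> \<delta> / 2"
    unfolding eventually_sequentially by blast
  define U where "U = (Qop r1 r2 a1 a2 l1 l2 ^^ N) (V L \<delta>)"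
  have "c' * real N \<le> 0" using c' by (simp add: mult_nonpos_nonneg)
  then have dU: "dist (U 0) (1 - k1, k2) \<le> \<delta> / 2" using N unfolding U_def by blast
  have "invR L \<delta> U" unfolding U_def by (rule iterR[OF G])
  then have "leq2 (U 0) (V L \<delta> 0)" unfolding invR_def[OF G] by blast
  moreover have "V L \<delta> 0 = (1 - k1 - \<delta>, k2 - \<delta>)"
    unfolding V_def[OF G] using eta_zero[OF G_facts(2)[OF G]] by simp
  ultimately have "fst (U 0) \<le> 1 - k1 - \<delta>" unfolding leq2_def by simp
  then have "\<delta> \<le> dist (fst (U 0)) (fst (1 - k1, k2))" by (simp add: dist_real_def)
  also have "\<dots> \<le> dist (U 0) (1 - k1, k2)" by (rule dist_fst_le)
  finally show False using dU d2 by simp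
qed

end

lemma main: "left_speed (Qop r1 r2 a1 a2 l1 l2) (1 - k1, k2) (1, 1) cm
   \<and> right_speed (Qop r1 r2 a1 a2 l1 l2) (0, 0) (1 - k1, k2) cp \<longrightarrow> cm + cp > 0"
proof
  assume A: "left_speed (Qop r1 r2 a1 a2 l1 l2) (1 - k1, k2) (1, 1) cm
   \<and> right_speed (Qop r1 r2 a1 a2 l1 l2) (0, 0) (1 - k1, k2) cp"
  obtain \<kappa> L c \<delta> where G: "good \<kappa> L c \<delta>" using good_exists by blast
  have "c \<le> cm" using cm_bound[OF G] A by blast
  moreover have "0 \<le> cp" using cp_bound[OF G] A by blast
  moreover have "0 < c" using G_facts(3)[OF G] .
  ultimately show "cm + cp > 0" by linarith
qed

end

theorem lemma6:
  fixes r1 r2 a1 a2 :: real and l1 l2 :: "real \<Rightarrow> real"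
  assumes "0 < r1" "r1 < 1" "0 < r2" "r2 < 1" "a1 > 1" "a2 > 1"
    and "kernel_ok l1" "kernel_ok l2"
  shows "\<forall>cm cp. left_speed (Qop r1 r2 a1 a2 l1 l2)
                     (1 - (1 - a1) / (1 - a1 * a2), (1 - a2) / (1 - a1 * a2)) (1, 1) cm
              \<and> right_speed (Qop r1 r2 a1 a2 l1 l2)
                     (0, 0) (1 - (1 - a1) / (1 - a1 * a2), (1 - a2) / (1 - a1 * a2)) cp
              \<longrightarrow> cm + cp > 0"
proof -
  interpret sys r1 r2 a1 a2 l1 l2 using assms by unfold_locales auto
  show ?thesis using main unfolding k1_def k2_def by blast
qed

end
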